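(* Let $F:\mathcal{S}_n\to\mathbb{R}$ be quasiconcave, uniformly elliptic, of class $C^1$, with $F(0)=0$. Let $u\in C^3(\overline{B}_1)$ satisfy $F(D^2u)=0$ in $B_1\subset\mathbb{R}^n$. Then \[ \sup_{B_{1/2}}|Du|\leq C\,\mathrm{osc}_{B_1}u. \] If in addition $F\in C^2$ and $u\in C^4$, then \[ \sup_{B_{1/2}}|D^2u|\leq C\,\mathrm{osc}_{B_1}u. \] Here $C$ depends only on $n,\lambda,\Lambda$.
   Context: $\mathcal{S}_n$ is the space of real symmetric $n\times n$ matrices. $F$ is uniformly elliptic with constants $0<\lambda\le\Lambda$ if $\lambda\|N\|\leq F(M+N)-F(M)\leq\Lambda\|N\|$ for all $M,N\in\mathcal{S}_n$ with $N\geq0$, where $\|N\|=\sup_{|x|=1}|Nx|$. $F$ is quasiconcave if $F(\theta M_1+(1-\theta)M_2)\geq\min\{F(M_1),F(M_2)\}$ for all $M_1,M_2\in\mathcal{S}_n$, $\theta\in[0,1]$. $\mathrm{osc}_{B_1}u=\sup_{B_1}u-\inf_{B_1}u$. *)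

theory Defs
  imports "HOL-Analysis.Analysis"
begin

type_synonym 'n mat = "real^'n^'n"

definition Sym :: "('n::finite) mat set" where
  "Sym = {M. transpose M = M}"

definition opnorm :: "('n::finite) mat \<Rightarrow> real" where
  "opnorm N = onorm (\<lambda>x. N *v x)"

definition psd :: "('n::finite) mat \<Rightarrow> bool" where
  "psd N \<longleftrightarrow> (\<forall>x. 0 \<le> x \<bullet> (N *v x))"

definition unif_elliptic :: "real \<Rightarrow> real \<Rightarrow> (('n::finite) mat \<Rightarrow> real) \<Rightarrow> bool" where
  "unif_elliptic lam Lam F \<longleftrightarrow> 0 < lam \<and> lam \<le> Lam \<and>
     (\<forall>M\<in>Sym. \<forall>N\<in>Sym. psd N \<longrightarrow>
        lam * opnorm N \<le> F (M + N) - F M \<and> F (M + N) - F M \<le> Lam * opnorm N)"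

definition quasiconcave :: "(('n::finite) mat \<Rightarrow> real) \<Rightarrow> bool" where
  "quasiconcave F \<longleftrightarrow> (\<forall>M1\<in>Sym. \<forall>M2\<in>Sym. \<forall>\<theta>::real. 0 \<le> \<theta> \<and> \<theta> \<le> 1 \<longrightarrow>
      F (\<theta> *\<^sub>R M1 + (1 - \<theta>) *\<^sub>R M2) \<ge> min (F M1) (F M2))"

definition C1_Sym :: "(('n::finite) mat \<Rightarrow> real) \<Rightarrow> bool" where
  "C1_Sym F \<longleftrightarrow> (\<exists>F'. (\<forall>M\<in>Sym. (F has_derivative blinfun_apply (F' M)) (at M within Sym))
                      \<and> continuous_on Sym F')"

definition C2_Sym :: "(('n::finite) mat \<Rightarrow> real) \<Rightarrow> bool" where
  "C2_Sym F \<longleftrightarrow> (\<exists>F' F''. (\<forall>M\<in>Sym. (F has_derivative blinfun_apply (F' M)) (at M within Sym))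
                      \<and> (\<forall>M\<in>Sym. (F' has_derivative blinfun_apply (F'' M)) (at M within Sym))
                      \<and> continuous_on Sym F' \<and> continuous_on Sym F'')"

text \<open>u is of class C^k on S (derivatives up to order k exist within S and are continuous on S).
  D is the family of iterated partial derivatives: D (i # is) = partial_i (D is).\<close>
definition Ck_on :: "nat \<Rightarrow> (real^'n::finite) set \<Rightarrow> (real^'n \<Rightarrow> real) \<Rightarrow> bool" where
  "Ck_on k S u \<longleftrightarrow> (\<exists>D :: 'n list \<Rightarrow> real^'n \<Rightarrow> real.
      (\<forall>x\<in>S. D [] x = u x) \<and>
      (\<forall>is. length is < k \<longrightarrow> (\<forall>x\<in>S.
          (D is has_derivative (\<lambda>h. \<Sum>i\<in>UNIV. h $ i * D (i # is) x)) (at x within S))) \<and>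
      (\<forall>is. length is \<le> k \<longrightarrow> continuous_on S (D is)))"

definition pdiff :: "'n::finite \<Rightarrow> (real^'n \<Rightarrow> real) \<Rightarrow> real^'n \<Rightarrow> real" where
  "pdiff i u x = deriv (\<lambda>t. u (x + t *\<^sub>R axis i 1)) 0"

definition grad :: "(real^'n::finite \<Rightarrow> real) \<Rightarrow> real^'n \<Rightarrow> real^'n" where
  "grad u x = (\<chi> i. pdiff i u x)"

definition hess :: "(real^'n::finite \<Rightarrow> real) \<Rightarrow> real^'n \<Rightarrow> real^'n^'n" where
  "hess u x = (\<chi> i j. pdiff i (pdiff j u) x)"

definition osc :: "(real^'n::finite \<Rightarrow> real) \<Rightarrow> (real^'n) set \<Rightarrow> real" where
  "osc u S = (SUP x\<in>S. u x) - (INF x\<in>S. u x)"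

end

theory Submission
  imports Defs
begin


lemma bounded_linear_axis_my: "bounded_linear (axis i :: 'b::real_normed_vector \<Rightarrow> 'b^'i::finite)"
proof (rule bounded_linear_intro[where K=1])
  show "axis i (x + y) = axis i x + axis i y" for x y :: 'b by (auto simp: axis_def vec_eq_iff)
  show "axis i (r *\<^sub>R x) = r *\<^sub>R axis i x" for r and x :: 'b by (auto simp: axis_def vec_eq_iff)
  show "norm (axis i x) \<le> norm x * 1" for x
  proof -
    have "norm (axis i x) \<le> (\<Sum>j\<in>UNIV. norm (axis i x $ j))" unfolding norm_vec_def by (rule L2_set_le_sum) simp
    also have "\<dots> = norm x" by (simp add: axis_def if_distrib cong: if_cong)
    finally show ?thesis by simp
  qed
qed

lemma vec_lambda_has_derivative:
  fixes f :: "'a::real_normed_vector \<Rightarrow> 'i::finite \<Rightarrow> 'b::real_normed_vector"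
  assumes "\<And>i. ((\<lambda>x. f x i) has_derivative f' i) F"
  shows "((\<lambda>x. \<chi> i. f x i) has_derivative (\<lambda>h. \<chi> i. f' i h)) F"
proof -
  have e: "\<And>g. (\<chi> i. g i) = (\<Sum>i\<in>UNIV. axis i (g i :: 'b))"
    by (simp add: vec_eq_iff axis_def cong: if_cong)
  have "((\<lambda>x. \<Sum>i\<in>UNIV. axis i (f x i)) has_derivative (\<lambda>h. \<Sum>i\<in>UNIV. axis i (f' i h))) F"
    apply (rule has_derivative_sum)
    apply (rule bounded_linear.has_derivative[OF bounded_linear_axis_my assms])
    done
  then show ?thesis by (simp only: e)
qed


lemma max_1d:
  fixes \<phi> \<phi>' :: "real \<Rightarrow> real"
  assumes dpos: "0 < \<delta>"
    and der: "\<And>t. \<bar>t\<bar> < \<delta> \<Longrightarrow> (\<phi> has_real_derivative \<phi>' t) (at t)"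
    and der2: "(\<phi>' has_real_derivative c) (at 0)"
    and mx: "\<And>t. \<bar>t\<bar> < \<delta> \<Longrightarrow> \<phi> t \<le> \<phi> 0"
  shows "c \<le> 0"
proof (rule ccontr)
  assume "\<not> c \<le> 0" hence c: "0 < c" by simp
  have z: "\<phi>' 0 = 0"
    by (rule DERIV_local_max[OF der[of 0] dpos]) (use mx dpos in auto)
  obtain d where d: "d > 0" and dd: "\<And>h. h > 0 \<Longrightarrow> h < d \<Longrightarrow> \<phi>' 0 < \<phi>' (0 + h)"
    using DERIV_pos_inc_right[OF der2 c] by blast
  define h where "h = min d \<delta> / 2"
  have h: "0 < h" "h < d" "h < \<delta>" using d dpos by (auto simp: h_def)
  obtain z where z1: "0 < z" "z < h" and z2: "\<phi> h - \<phi> 0 = (h - 0) * \<phi>' z"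
    using MVT2[of 0 h \<phi> \<phi>'] h der by force
  have "\<phi>' z > 0" using dd[of z] z1 h z by simp
  hence "h * \<phi>' z > 0" using h by simp
  hence "\<phi> h > \<phi> 0" using z2 by simp
  moreover have "\<phi> h \<le> \<phi> 0" using mx h by simp
  ultimately show False by simp
qed

lemma min_1d_strict:
  fixes g g' :: "real \<Rightarrow> real"
  assumes der: "\<And>t. (g has_real_derivative g' t) (at t)"
    and der2: "(g' has_real_derivative c) (at 0)"
    and z: "g' 0 = 0" and c: "0 < c"
  shows "\<exists>h>0. g h > g 0 \<and> g (-h) > g 0"
proof -
  obtain d1 where d1: "d1 > 0" and dd1: "\<And>h. h > 0 \<Longrightarrow> h < d1 \<Longrightarrow> g' 0 < g' (0 + h)"
    using DERIV_pos_inc_right[OF der2 c] by blast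
  obtain d2 where d2: "d2 > 0" and dd2: "\<And>h. h > 0 \<Longrightarrow> h < d2 \<Longrightarrow> g' (0 - h) < g' 0"
    using DERIV_pos_inc_left[OF der2 c] by blast
  define h where "h = min d1 d2 / 2"
  have h: "0 < h" "h < d1" "h < d2" using d1 d2 by (auto simp: h_def)
  obtain z where z1: "0 < z" "z < h" and z2: "g h - g 0 = (h - 0) * g' z"
    using MVT2[of 0 h g g'] h der by force
  have "g' z > 0" using dd1[of z] z1 h z by simp
  hence "h * g' z > 0" using h by simp
  hence A: "g h > g 0" using z2 by simp
  obtain w where w1: "-h < w" "w < 0" and w2: "g 0 - g (-h) = (0 - -h) * g' w"
    using MVT2[of "-h" 0 g g'] h der by force
  have "g' w < 0" using dd2[of "-w"] w1 h z by simp
  hence "h * g' w < 0" using h by (simp add: mult_pos_neg)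
  hence B: "g (-h) > g 0" using w2 by simp
  show ?thesis using A B h by blast
qed



definition outer :: "real^'n::finite \<Rightarrow> real^'n \<Rightarrow> real^'n^'n" where
  "outer a b = (\<chi> i j. a$i * b$j)"

definition symm :: "real^'n::finite^'n \<Rightarrow> real^'n^'n" where
  "symm H = (1/2) *\<^sub>R (H + transpose H)"

lemma outer_mv: "outer a b *v h = (b \<bullet> h) *\<^sub>R a"
  by (simp add: outer_def matrix_vector_mult_def vec_eq_iff inner_vec_def sum_distrib_left algebra_simps)

lemma transpose_add: "transpose (A + B) = transpose A + (transpose B :: real^'n::finite^'n)"
  by (simp add: transpose_def vec_eq_iff)
lemma transpose_minus: "transpose (- A) = - (transpose A :: real^'n::finite^'n)"
  by (simp add: transpose_def vec_eq_iff)
lemma transpose_diff: "transpose (A - B) = transpose A - (transpose B :: real^'n::finite^'n)"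
  by (simp add: transpose_def vec_eq_iff)
lemma transpose_outer: "transpose (outer a b) = outer b a"
  by (simp add: transpose_def outer_def vec_eq_iff)

lemma Sym_add: "A \<in> Sym \<Longrightarrow> B \<in> Sym \<Longrightarrow> A + B \<in> Sym"
  by (simp add: Sym_def transpose_add)
lemma Sym_diff: "A \<in> Sym \<Longrightarrow> B \<in> Sym \<Longrightarrow> A - B \<in> Sym"
  by (simp add: Sym_def transpose_diff)
lemma Sym_minus: "A \<in> Sym \<Longrightarrow> - A \<in> Sym"
  by (simp add: Sym_def transpose_minus)
lemma Sym_scaleR: "A \<in> Sym \<Longrightarrow> c *\<^sub>R A \<in> Sym"
  by (simp add: Sym_def transpose_scalar)
lemma Sym_zero: "0 \<in> Sym"
  by (simp add: Sym_def transpose_def vec_eq_iff)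
lemma Sym_mat: "mat c \<in> Sym"
  by (simp add: Sym_def)
lemma Sym_outer: "outer a a \<in> Sym"
  by (simp add: Sym_def transpose_outer)
lemma Sym_symm: "symm H \<in> Sym"
  by (simp add: Sym_def symm_def transpose_scalar transpose_add add.commute)
lemma symm_Sym: "H \<in> Sym \<Longrightarrow> symm H = H"
  by (simp add: Sym_def symm_def scaleR_2[symmetric])
lemma Sym_iff: "H \<in> Sym \<longleftrightarrow> (\<forall>i j. H$i$j = H$j$i)"
  by (auto simp: Sym_def transpose_def vec_eq_iff)

lemma inner_transpose_mv: "x \<bullet> (transpose H *v x) = x \<bullet> (H *v (x::real^'n::finite))"
proof -
  have "x \<bullet> (transpose H *v x) = (x v* H) \<bullet> x" by (simp add: inner_commute)
  also have "\<dots> = x \<bullet> (H *v x)" by (rule dot_lmul_matrix)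
  finally show ?thesis .
qed

lemma inner_vmul: "x \<bullet> (x v* H) = x \<bullet> (H *v (x::real^'n::finite))"
proof -
  have "x \<bullet> (x v* H) = (x v* H) \<bullet> x" by (rule inner_commute)
  also have "\<dots> = x \<bullet> (H *v x)" by (rule dot_lmul_matrix)
  finally show ?thesis .
qed

lemma inner_symm: "x \<bullet> (symm H *v x) = x \<bullet> (H *v x)"
  by (simp add: symm_def matrix_vector_mult_add_rdistrib inner_transpose_mv
      scaleR_matrix_vector_assoc[symmetric] inner_add_right inner_vmul)

lemma psd_outer: "psd (outer a a)"
  by (simp add: psd_def outer_mv inner_commute)

lemma bl_mv: "bounded_linear (\<lambda>x. (N::real^'n::finite^'n) *v x)"
  by (simp add: matrix_vector_mul_linear linear_linear)

lemma opnorm_nonneg: "0 \<le> opnorm N"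
  by (simp add: opnorm_def onorm_pos_le bl_mv)

lemma opnorm_le: "(\<And>x. norm (N *v x) \<le> b * norm x) \<Longrightarrow> opnorm N \<le> b"
  unfolding opnorm_def by (rule onorm_le)

lemma opnorm_ge: "norm (N *v x) \<le> opnorm N * norm x"
  unfolding opnorm_def by (rule onorm[OF bl_mv])

lemma opnorm_outer: "opnorm (outer a a) = (norm a)^2"
proof (rule antisym)
  show "opnorm (outer a a) \<le> (norm a)^2"
    apply (rule opnorm_le)
  proof -
    fix x
    have "\<bar>a \<bullet> x\<bar> * norm a \<le> (norm a * norm x) * norm a"
      by (rule mult_right_mono[OF Cauchy_Schwarz_ineq2 norm_ge_zero])
    then show "norm (outer a a *v x) \<le> (norm a)^2 * norm x"
      by (simp add: outer_mv power2_eq_square mult_ac)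
  qed
  have "norm a * (norm a)^2 \<le> opnorm (outer a a) * norm a"
    using opnorm_ge[of "outer a a" a] by (simp add: outer_mv power2_norm_eq_inner[symmetric] power2_eq_square)
  then show "(norm a)^2 \<le> opnorm (outer a a)"
    by (cases "a = 0") (auto simp: power2_eq_square outer_def opnorm_nonneg)
qed

lemma opnorm_scaleR: "opnorm (c *\<^sub>R N) = \<bar>c\<bar> * opnorm N"
proof -
  have "(\<lambda>x. (c *\<^sub>R N) *v x) = (\<lambda>x. c *\<^sub>R (N *v x))"
    by (rule ext) (simp add: scaleR_matrix_vector_assoc)
  then show ?thesis unfolding opnorm_def using onorm_scaleR[OF bl_mv, of c N] by simp
qed

lemma opnorm_mat1: "opnorm (mat 1 :: real^'n::finite^'n) = 1"
proof -
  have "onorm (\<lambda>x. (mat 1 :: real^'n^'n) *v x) = onorm (\<lambda>x::real^'n. x)"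
    by (rule arg_cong[where f=onorm]) (rule ext, simp)
  then show ?thesis unfolding opnorm_def using onorm_id[where 'a="real^'n"] by linarith
qed

lemma opnorm_triangle: "opnorm (A + B) \<le> opnorm A + opnorm B"
proof -
  have "(\<lambda>x. (A + B) *v x) = (\<lambda>x. A *v x + B *v x)"
    by (rule ext) (simp add: matrix_vector_mult_add_rdistrib)
  then show ?thesis unfolding opnorm_def using onorm_triangle[OF bl_mv bl_mv, of A B] by simp
qed

lemma psd_scaleR: "psd N \<Longrightarrow> 0 \<le> c \<Longrightarrow> psd (c *\<^sub>R N)"
  by (simp add: psd_def scaleR_matrix_vector_assoc[symmetric])



definition ellop :: "real \<Rightarrow> real \<Rightarrow> (('n::finite) mat \<Rightarrow>\<^sub>L real) \<Rightarrow> bool" where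
  "ellop lam Lam L \<longleftrightarrow> (\<forall>N\<in>Sym. psd N \<longrightarrow> lam * opnorm N \<le> blinfun_apply L N \<and> blinfun_apply L N \<le> Lam * opnorm N)"

definition ls :: "(('n::finite) mat \<Rightarrow>\<^sub>L real) \<Rightarrow> 'n mat \<Rightarrow> real" where
  "ls L H = blinfun_apply L (symm H)"

lemma line_deriv:
  fixes F :: "('n::finite) mat \<Rightarrow> real"
  assumes D: "\<forall>M\<in>Sym. (F has_derivative blinfun_apply (F' M)) (at M within Sym)"
    and M: "M \<in> Sym" and X: "X \<in> Sym"
  shows "((\<lambda>t. F (M + t *\<^sub>R X)) has_real_derivative blinfun_apply (F' (M + t *\<^sub>R X)) X) (at t)"
proof -
  have sub: "(\<lambda>t. M + t *\<^sub>R X) ` UNIV \<subseteq> Sym" using M X by (auto intro: Sym_add Sym_scaleR)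
  have d1: "((\<lambda>t. M + t *\<^sub>R X) has_derivative (\<lambda>s. s *\<^sub>R X)) (at t within UNIV)"
    by (auto intro!: derivative_eq_intros)
  have "((\<lambda>t. F (M + t *\<^sub>R X)) has_derivative (\<lambda>s. blinfun_apply (F' (M + t *\<^sub>R X)) (s *\<^sub>R X))) (at t within UNIV)"
    by (rule has_derivative_in_compose2[OF _ sub _ d1]) (use D in auto)
  moreover have "(\<lambda>s. blinfun_apply (F' (M + t *\<^sub>R X)) (s *\<^sub>R X)) = (*) (blinfun_apply (F' (M + t *\<^sub>R X)) X)"
    by (rule ext) (simp add: blinfun.scaleR_right)
  ultimately show ?thesis by (simp add: has_field_derivative_def)
qed

lemma ellop_of_deriv:
  fixes F :: "('n::finite) mat \<Rightarrow> real"
  assumes ue: "unif_elliptic lam Lam F"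
    and D: "\<forall>M\<in>Sym. (F has_derivative blinfun_apply (F' M)) (at M within Sym)"
    and M: "M \<in> Sym"
  shows "ellop lam Lam (F' M)"
  unfolding ellop_def
proof (intro ballI impI conjI)
  fix N :: "'n mat" assume N: "N \<in> Sym" "psd N"
  have el: "lam * opnorm (h *\<^sub>R N) \<le> F (M + h *\<^sub>R N) - F M \<and> F (M + h *\<^sub>R N) - F M \<le> Lam * opnorm (h *\<^sub>R N)"
    if "h > 0" for h
  proof -
    have hs: "h *\<^sub>R N \<in> Sym" by (rule Sym_scaleR[OF N(1)])
    have hp: "psd (h *\<^sub>R N)" by (rule psd_scaleR[OF N(2)]) (use that in simp)
    show ?thesis using ue M hs hp unfolding unif_elliptic_def by blast
  qed
  have dg: "((\<lambda>t. F (M + t *\<^sub>R N)) has_real_derivative blinfun_apply (F' M) N) (at 0)"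
    using line_deriv[OF D M N(1), of 0] by simp
  show "lam * opnorm N \<le> blinfun_apply (F' M) N"
  proof (rule ccontr)
    assume "\<not> ?thesis"
    hence neg: "blinfun_apply (F' M) N - lam * opnorm N < 0" by simp
    have "((\<lambda>t. F (M + t *\<^sub>R N) - t * (lam * opnorm N)) has_real_derivative blinfun_apply (F' M) N - lam * opnorm N) (at 0)"
      by (auto intro!: derivative_eq_intros dg)
    from DERIV_neg_dec_right[OF this neg] obtain d where d: "d > 0"
      and dd: "\<And>h. h > 0 \<Longrightarrow> h < d \<Longrightarrow> F (M + 0 *\<^sub>R N) - 0 * (lam * opnorm N) > F (M + (0 + h) *\<^sub>R N) - (0 + h) * (lam * opnorm N)"
      by blast
    have "F M > F (M + (d/2) *\<^sub>R N) - (d/2) * (lam * opnorm N)" using dd[of "d/2"] d by simp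
    moreover have "lam * opnorm ((d/2) *\<^sub>R N) \<le> F (M + (d/2) *\<^sub>R N) - F M" using el[of "d/2"] d by simp
    ultimately show False using d by (simp add: opnorm_scaleR mult_ac)
  qed
  show "blinfun_apply (F' M) N \<le> Lam * opnorm N"
  proof (rule ccontr)
    assume "\<not> ?thesis"
    hence pos: "0 < blinfun_apply (F' M) N - Lam * opnorm N" by simp
    have "((\<lambda>t. F (M + t *\<^sub>R N) - t * (Lam * opnorm N)) has_real_derivative blinfun_apply (F' M) N - Lam * opnorm N) (at 0)"
      by (auto intro!: derivative_eq_intros dg)
    from DERIV_pos_inc_right[OF this pos] obtain d where d: "d > 0"
      and dd: "\<And>h. h > 0 \<Longrightarrow> h < d \<Longrightarrow> F (M + 0 *\<^sub>R N) - 0 * (Lam * opnorm N) < F (M + (0 + h) *\<^sub>R N) - (0 + h) * (Lam * opnorm N)"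
      by blast
    have "F M < F (M + (d/2) *\<^sub>R N) - (d/2) * (Lam * opnorm N)" using dd[of "d/2"] d by simp
    moreover have "F (M + (d/2) *\<^sub>R N) - F M \<le> Lam * opnorm ((d/2) *\<^sub>R N)" using el[of "d/2"] d by simp
    ultimately show False using d by (simp add: opnorm_scaleR mult_ac)
  qed
qed

lemma qc_first_order:
  fixes F :: "('n::finite) mat \<Rightarrow> real"
  assumes qc: "quasiconcave F"
    and D: "\<forall>M\<in>Sym. (F has_derivative blinfun_apply (F' M)) (at M within Sym)"
    and X: "X \<in> Sym" and Y: "Y \<in> Sym" and le: "F X \<le> F Y"
  shows "0 \<le> blinfun_apply (F' X) (Y - X)"
proof (rule ccontr)
  assume "\<not> ?thesis"
  hence neg: "blinfun_apply (F' X) (Y - X) < 0" by simp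
  have YX: "Y - X \<in> Sym" using Y X by (rule Sym_diff)
  have dg: "((\<lambda>t. F (X + t *\<^sub>R (Y - X))) has_real_derivative blinfun_apply (F' X) (Y - X)) (at 0)"
    using line_deriv[OF D X YX, of 0] by simp
  from DERIV_neg_dec_right[OF dg neg] obtain d where d: "d > 0"
    and dd: "\<And>h. h > 0 \<Longrightarrow> h < d \<Longrightarrow> F (X + 0 *\<^sub>R (Y - X)) > F (X + (0 + h) *\<^sub>R (Y - X))" by blast
  define h where "h = min d 1 / 2"
  have h: "0 < h" "h < d" "h \<le> 1" using d by (auto simp: h_def)
  have "F (h *\<^sub>R Y + (1 - h) *\<^sub>R X) \<ge> min (F Y) (F X)"
    using qc Y X h unfolding quasiconcave_def by auto
  moreover have "h *\<^sub>R Y + (1 - h) *\<^sub>R X = X + h *\<^sub>R (Y - X)"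
    by (simp add: algebra_simps)
  ultimately have "F (X + h *\<^sub>R (Y - X)) \<ge> F X" using le by simp
  moreover have "F X > F (X + h *\<^sub>R (Y - X))" using dd[of h] h by simp
  ultimately show False by simp
qed

lemma qc_second_order:
  fixes F :: "('n::finite) mat \<Rightarrow> real"
  assumes qc: "quasiconcave F"
    and D: "\<forall>M\<in>Sym. (F has_derivative blinfun_apply (F' M)) (at M within Sym)"
    and D2: "\<forall>M\<in>Sym. (F' has_derivative blinfun_apply (F'' M)) (at M within Sym)"
    and M: "M \<in> Sym" and X: "X \<in> Sym" and z: "blinfun_apply (F' M) X = 0"
  shows "blinfun_apply (blinfun_apply (F'' M) X) X \<le> 0"
proof (rule ccontr)
  assume "\<not> ?thesis"
  hence c: "0 < blinfun_apply (blinfun_apply (F'' M) X) X" by simp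
  have sub: "(\<lambda>t. M + t *\<^sub>R X) ` UNIV \<subseteq> Sym" using M X by (auto intro: Sym_add Sym_scaleR)
  have d1: "((\<lambda>t. M + t *\<^sub>R X) has_derivative (\<lambda>s. s *\<^sub>R X)) (at 0 within UNIV)"
    by (auto intro!: derivative_eq_intros)
  have "((\<lambda>t. F' (M + t *\<^sub>R X)) has_derivative (\<lambda>s. blinfun_apply (F'' (M + 0 *\<^sub>R X)) (s *\<^sub>R X))) (at 0 within UNIV)"
    by (rule has_derivative_in_compose2[OF _ sub _ d1]) (use D2 in auto)
  hence "((\<lambda>t. blinfun_apply (F' (M + t *\<^sub>R X)) X) has_derivative (\<lambda>s. blinfun_apply (blinfun_apply (F'' (M + 0 *\<^sub>R X)) (s *\<^sub>R X)) X)) (at 0)"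
    by (rule bounded_linear.has_derivative[OF blinfun.bounded_linear_left, simplified])
  moreover have "(\<lambda>s. blinfun_apply (blinfun_apply (F'' (M + 0 *\<^sub>R X)) (s *\<^sub>R X)) X) = (*) (blinfun_apply (blinfun_apply (F'' M) X) X)"
    by (rule ext) (simp add: blinfun.scaleR_right blinfun.scaleR_left)
  ultimately have d2: "((\<lambda>t. blinfun_apply (F' (M + t *\<^sub>R X)) X) has_real_derivative blinfun_apply (blinfun_apply (F'' M) X) X) (at 0)"
    by (simp add: has_field_derivative_def)
  obtain h where h: "h > 0" and g1: "F (M + h *\<^sub>R X) > F (M + 0 *\<^sub>R X)" and g2: "F (M + (-h) *\<^sub>R X) > F (M + 0 *\<^sub>R X)"
    using min_1d_strict[where g="\<lambda>t. F (M + t *\<^sub>R X)", OF line_deriv[OF D M X] d2 _ c] z by auto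
  have q: "\<And>M1 M2 \<theta>. M1\<in>Sym \<Longrightarrow> M2\<in>Sym \<Longrightarrow> 0\<le>\<theta> \<Longrightarrow> \<theta>\<le>1 \<Longrightarrow> F (\<theta> *\<^sub>R M1 + (1-\<theta>) *\<^sub>R M2) \<ge> min (F M1) (F M2)"
    using qc unfolding quasiconcave_def by blast
  have m1: "M + h *\<^sub>R X \<in> Sym" and m2: "M + (-h) *\<^sub>R X \<in> Sym" using M X by (auto intro!: Sym_add Sym_scaleR Sym_diff)
  have "F ((1/2) *\<^sub>R (M + h *\<^sub>R X) + (1 - 1/2) *\<^sub>R (M + (-h) *\<^sub>R X)) \<ge> min (F (M + h *\<^sub>R X)) (F (M + (-h) *\<^sub>R X))"
    by (rule q[OF m1 m2]) auto
  moreover have "(1/2) *\<^sub>R (M + h *\<^sub>R X) + (1 - 1/2) *\<^sub>R (M + (-h) *\<^sub>R X) = M"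
    by (simp add: algebra_simps scaleR_2[symmetric])
  ultimately show False using g1 g2 by simp
qed



lemma symm_add: "symm (A + B) = symm A + symm B"
  by (simp add: symm_def transpose_add algebra_simps)
lemma symm_scaleR: "symm (c *\<^sub>R A) = c *\<^sub>R symm A"
  by (simp add: symm_def transpose_scalar algebra_simps)
lemma symm_diff: "symm (A - B) = symm A - symm B"
  by (simp add: symm_def transpose_diff algebra_simps)
lemma symm_zero: "symm 0 = 0"
  by (simp add: symm_def transpose_def vec_eq_iff)
lemma symm_sum: "symm (\<Sum>i\<in>I. f i) = (\<Sum>i\<in>I. symm (f i))"
  by (induction I rule: infinite_finite_induct) (auto simp: symm_zero symm_add)
lemma symm_outer_swap: "symm (outer a b) = symm (outer b a)"
  by (simp add: symm_def transpose_outer add.commute)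

lemma ls_add: "ls L (A + B) = ls L A + ls L B"
  by (simp add: ls_def symm_add blinfun.bilinear_simps)
lemma ls_scaleR: "ls L (c *\<^sub>R A) = c * ls L A"
  by (simp add: ls_def symm_scaleR blinfun.bilinear_simps)
lemma ls_diff: "ls L (A - B) = ls L A - ls L B"
  by (simp add: ls_def symm_diff blinfun.bilinear_simps)
lemma ls_zero: "ls L 0 = 0"
  by (simp add: ls_def symm_zero blinfun.bilinear_simps)
lemma ls_sum: "ls L (\<Sum>i\<in>I. f i) = (\<Sum>i\<in>I. ls L (f i))"
  by (simp add: ls_def symm_sum blinfun.bilinear_simps)
lemma ls_outer_swap: "ls L (outer a b) = ls L (outer b a)"
  by (simp add: ls_def symm_outer_swap)
lemma ls_Sym: "H \<in> Sym \<Longrightarrow> ls L H = blinfun_apply L H"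
  by (simp add: ls_def symm_Sym)

lemma outer_add_left: "outer (a + b) c = outer a c + outer b c"
  by (simp add: outer_def vec_eq_iff algebra_simps)
lemma outer_add_right: "outer a (b + c) = outer a b + outer a c"
  by (simp add: outer_def vec_eq_iff algebra_simps)
lemma outer_scaleR_left: "outer (r *\<^sub>R a) b = r *\<^sub>R outer a b"
  by (simp add: outer_def vec_eq_iff algebra_simps)
lemma outer_scaleR_right: "outer a (r *\<^sub>R b) = r *\<^sub>R outer a b"
  by (simp add: outer_def vec_eq_iff algebra_simps)
lemma outer_minus_left: "outer (- a) b = - outer a b"
  by (simp add: outer_def vec_eq_iff algebra_simps)
lemma outer_minus_right: "outer a (- b) = - outer a b"
  by (simp add: outer_def vec_eq_iff algebra_simps)
lemma outer_zero_left: "outer 0 b = 0"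
  by (simp add: outer_def vec_eq_iff)
lemma outer_zero_right: "outer a 0 = 0"
  by (simp add: outer_def vec_eq_iff)
lemma outer_sum_left: "outer (\<Sum>i\<in>I. f i) b = (\<Sum>i\<in>I. outer (f i) b)"
  by (induction I rule: infinite_finite_induct) (auto simp: outer_add_left outer_zero_left)
lemma outer_sum_right: "outer a (\<Sum>i\<in>I. f i) = (\<Sum>i\<in>I. outer a (f i))"
  by (induction I rule: infinite_finite_induct) (auto simp: outer_add_right outer_zero_right)

lemma ls_Q_lower:
  assumes "ellop lam Lam L" shows "lam * (norm a)^2 \<le> ls L (outer a a)"
proof -
  have "lam * opnorm (outer a a) \<le> blinfun_apply L (outer a a)"
    using assms psd_outer[of a] Sym_outer[of a] unfolding ellop_def by blast
  then show ?thesis by (simp add: ls_Sym Sym_outer opnorm_outer)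
qed

lemma ls_Q_upper:
  assumes "ellop lam Lam L" shows "ls L (outer a a) \<le> Lam * (norm a)^2"
proof -
  have "blinfun_apply L (outer a a) \<le> Lam * opnorm (outer a a)"
    using assms psd_outer[of a] Sym_outer[of a] unfolding ellop_def by blast
  then show ?thesis by (simp add: ls_Sym Sym_outer opnorm_outer)
qed

lemma ls_Q_nonneg:
  assumes "ellop lam Lam L" "0 \<le> lam" shows "0 \<le> ls L (outer a a)"
  using ls_Q_lower[OF assms(1), of a] assms(2) by (meson order_trans zero_le_mult_iff zero_le_power2)

lemma ls_B_lower:
  assumes "ellop lam Lam L" "0 \<le> lam"
  shows "- (ls L (outer a a) + ls L (outer b b)) \<le> 2 * ls L (outer a b)"
proof -
  have "0 \<le> ls L (outer (a + b) (a + b))" by (rule ls_Q_nonneg[OF assms])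
  also have "\<dots> = ls L (outer a a) + 2 * ls L (outer a b) + ls L (outer b b)"
    by (simp add: outer_add_left outer_add_right ls_add ls_outer_swap[of L b a])
  finally show ?thesis by simp
qed

lemma ls_nsd:
  assumes "ellop lam Lam L" "0 \<le> lam" and nsd: "\<And>\<xi>. \<xi> \<bullet> (H *v \<xi>) \<le> 0"
  shows "ls L H \<le> 0"
proof -
  have s: "- symm H \<in> Sym" by (rule Sym_minus[OF Sym_symm])
  have mv: "(- symm H) *v x = - (symm H *v x)" for x
    by (simp add: matrix_vector_mult_def vec_eq_iff sum_negf)
  have p: "psd (- symm H)"
    unfolding psd_def using nsd by (simp add: inner_symm mv)
  have "lam * opnorm (- symm H) \<le> blinfun_apply L (- symm H)"
    using assms(1) s p unfolding ellop_def by blast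
  moreover have "blinfun_apply L (- symm H) = - ls L H"
    by (simp add: ls_def blinfun.bilinear_simps)
  moreover have "0 \<le> lam * opnorm (- symm H)" by (rule mult_nonneg_nonneg[OF assms(2) opnorm_nonneg])
  ultimately show ?thesis by simp
qed

lemma ls_id_upper:
  assumes "ellop lam Lam L" shows "ls L (mat 1) \<le> Lam"
proof -
  have "psd (mat 1 :: 'a mat)" by (simp add: psd_def inner_ge_zero)
  then have "blinfun_apply L (mat 1) \<le> Lam * opnorm (mat 1 :: 'a mat)"
    using assms Sym_mat[of 1] unfolding ellop_def by blast
  then show ?thesis by (simp add: ls_Sym Sym_mat opnorm_mat1)
qed
lemma ls_id_lower:
  assumes "ellop lam Lam L" shows "lam \<le> ls L (mat 1)"
proof -
  have "psd (mat 1 :: 'a mat)" by (simp add: psd_def inner_ge_zero)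
  then have "lam * opnorm (mat 1 :: 'a mat) \<le> blinfun_apply L (mat 1)"
    using assms Sym_mat[of 1] unfolding ellop_def by blast
  then show ?thesis by (simp add: ls_Sym Sym_mat opnorm_mat1)
qed



definition C2 :: "(real^'n::finite \<Rightarrow> real) \<Rightarrow> (real^'n \<Rightarrow> real^'n) \<Rightarrow> (real^'n \<Rightarrow> real^'n^'n) \<Rightarrow> (real^'n) set \<Rightarrow> bool" where
  "C2 f g H S \<longleftrightarrow> (\<forall>x\<in>S. (f has_derivative (\<lambda>h. g x \<bullet> h)) (at x) \<and> (g has_derivative (\<lambda>h. H x *v h)) (at x))"

lemma C2_const: "C2 (\<lambda>x. c) (\<lambda>x. 0) (\<lambda>x. 0) S"
  unfolding C2_def by (auto intro!: derivative_eq_intros)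

lemma C2_add:
  assumes "C2 f1 g1 H1 S" "C2 f2 g2 H2 S"
  shows "C2 (\<lambda>x. f1 x + f2 x) (\<lambda>x. g1 x + g2 x) (\<lambda>x. H1 x + H2 x) S"
  using assms unfolding C2_def
  by (auto intro!: derivative_eq_intros simp: inner_add_left matrix_vector_mult_add_rdistrib)

lemma C2_scale:
  assumes "C2 f g H S"
  shows "C2 (\<lambda>x. c * f x) (\<lambda>x. c *\<^sub>R g x) (\<lambda>x. c *\<^sub>R H x) S"
  using assms unfolding C2_def
  by (auto intro!: derivative_eq_intros simp: scaleR_matrix_vector_assoc[symmetric])

lemma C2_mult:
  assumes "C2 f1 g1 H1 S" "C2 f2 g2 H2 S"
  shows "C2 (\<lambda>x. f1 x * f2 x) (\<lambda>x. f1 x *\<^sub>R g2 x + f2 x *\<^sub>R g1 x)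
            (\<lambda>x. f1 x *\<^sub>R H2 x + f2 x *\<^sub>R H1 x + outer (g2 x) (g1 x) + outer (g1 x) (g2 x)) S"
  unfolding C2_def
proof (intro ballI conjI)
  fix x assume x: "x \<in> S"
  have a1: "(f1 has_derivative (\<lambda>h. g1 x \<bullet> h)) (at x)" "(g1 has_derivative (\<lambda>h. H1 x *v h)) (at x)"
    and a2: "(f2 has_derivative (\<lambda>h. g2 x \<bullet> h)) (at x)" "(g2 has_derivative (\<lambda>h. H2 x *v h)) (at x)"
    using assms x unfolding C2_def by auto
  have "((\<lambda>x. f1 x * f2 x) has_derivative (\<lambda>h. f1 x * (g2 x \<bullet> h) + (g1 x \<bullet> h) * f2 x)) (at x)"
    by (rule has_derivative_mult[OF a1(1) a2(1)])
  moreover have "(\<lambda>h. f1 x * (g2 x \<bullet> h) + (g1 x \<bullet> h) * f2 x) = (\<lambda>h. (f1 x *\<^sub>R g2 x + f2 x *\<^sub>R g1 x) \<bullet> h)"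
    by (rule ext) (simp add: inner_add_left algebra_simps)
  ultimately show "((\<lambda>x. f1 x * f2 x) has_derivative (\<lambda>h. (f1 x *\<^sub>R g2 x + f2 x *\<^sub>R g1 x) \<bullet> h)) (at x)"
    by simp
  have "((\<lambda>x. f1 x *\<^sub>R g2 x + f2 x *\<^sub>R g1 x) has_derivative
     (\<lambda>h. (f1 x *\<^sub>R (H2 x *v h) + (g1 x \<bullet> h) *\<^sub>R g2 x) + (f2 x *\<^sub>R (H1 x *v h) + (g2 x \<bullet> h) *\<^sub>R g1 x))) (at x)"
    by (rule has_derivative_add[OF has_derivative_scaleR[OF a1(1) a2(2)] has_derivative_scaleR[OF a2(1) a1(2)]])
  moreover have "(\<lambda>h. (f1 x *\<^sub>R (H2 x *v h) + (g1 x \<bullet> h) *\<^sub>R g2 x) + (f2 x *\<^sub>R (H1 x *v h) + (g2 x \<bullet> h) *\<^sub>R g1 x))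
     = (\<lambda>h. (f1 x *\<^sub>R H2 x + f2 x *\<^sub>R H1 x + outer (g2 x) (g1 x) + outer (g1 x) (g2 x)) *v h)"
    by (rule ext) (simp add: matrix_vector_mult_add_rdistrib scaleR_matrix_vector_assoc[symmetric] outer_mv)
  ultimately show "((\<lambda>x. f1 x *\<^sub>R g2 x + f2 x *\<^sub>R g1 x) has_derivative
     (\<lambda>h. (f1 x *\<^sub>R H2 x + f2 x *\<^sub>R H1 x + outer (g2 x) (g1 x) + outer (g1 x) (g2 x)) *v h)) (at x)"
    by simp
qed

lemma C2_sum:
  assumes "finite I" "\<And>i. i \<in> I \<Longrightarrow> C2 (f i) (g i) (H i) S"
  shows "C2 (\<lambda>x. \<Sum>i\<in>I. f i x) (\<lambda>x. \<Sum>i\<in>I. g i x) (\<lambda>x. \<Sum>i\<in>I. H i x) S"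
  using assms
proof (induction I rule: finite_induct)
  case empty
  then show ?case using C2_const[of 0 S] by simp
next
  case (insert i I)
  have "C2 (\<lambda>x. f i x + (\<Sum>i\<in>I. f i x)) (\<lambda>x. g i x + (\<Sum>i\<in>I. g i x)) (\<lambda>x. H i x + (\<Sum>i\<in>I. H i x)) S"
    by (rule C2_add) (use insert in auto)
  then show ?case using insert by simp
qed

lemma C2_max:
  assumes C: "C2 f g H S" and S: "open S" and x0: "x0 \<in> S"
    and d: "0 < \<delta>" and mx: "\<And>y. y \<in> ball x0 \<delta> \<Longrightarrow> f y \<le> f x0"
    and ell: "ellop lam Lam L" and lam: "0 \<le> lam"
  shows "ls L (H x0) \<le> 0"
proof (rule ls_nsd[OF ell lam])
  fix \<xi> :: "real^'a"
  show "\<xi> \<bullet> (H x0 *v \<xi>) \<le> 0"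
  proof (cases "\<xi> = 0")
    case True then show ?thesis by simp
  next
    case False
    hence nz: "norm \<xi> > 0" by simp
    obtain r where r: "r > 0" "ball x0 r \<subseteq> S" using S x0 open_contains_ball by blast
    define \<delta>' where "\<delta>' = min \<delta> r / norm \<xi>"
    have d': "\<delta>' > 0" using d r nz by (simp add: \<delta>'_def)
    have inb: "x0 + t *\<^sub>R \<xi> \<in> ball x0 \<delta> \<inter> ball x0 r" if "\<bar>t\<bar> < \<delta>'" for t
    proof -
      have "\<bar>t\<bar> * norm \<xi> < min \<delta> r" using that nz by (simp add: \<delta>'_def pos_less_divide_eq)
      then show ?thesis by (simp add: dist_norm)
    qed
    have der: "((\<lambda>t. f (x0 + t *\<^sub>R \<xi>)) has_real_derivative g (x0 + t *\<^sub>R \<xi>) \<bullet> \<xi>) (at t)"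
      if "\<bar>t\<bar> < \<delta>'" for t
    proof -
      have xs: "x0 + t *\<^sub>R \<xi> \<in> S" using inb[OF that] r by auto
      have l: "((\<lambda>t. x0 + t *\<^sub>R \<xi>) has_derivative (\<lambda>s. s *\<^sub>R \<xi>)) (at t)"
        by (auto intro!: derivative_eq_intros)
      have "((\<lambda>t. f (x0 + t *\<^sub>R \<xi>)) has_derivative (\<lambda>s. g (x0 + t *\<^sub>R \<xi>) \<bullet> (s *\<^sub>R \<xi>))) (at t)"
        by (rule has_derivative_compose[OF l]) (use C xs in \<open>auto simp: C2_def\<close>)
      moreover have "(\<lambda>s. g (x0 + t *\<^sub>R \<xi>) \<bullet> (s *\<^sub>R \<xi>)) = (*) (g (x0 + t *\<^sub>R \<xi>) \<bullet> \<xi>)"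
        by (rule ext) simp
      ultimately show ?thesis by (simp add: has_field_derivative_def)
    qed
    have der2: "((\<lambda>t. g (x0 + t *\<^sub>R \<xi>) \<bullet> \<xi>) has_real_derivative (H x0 *v \<xi>) \<bullet> \<xi>) (at 0)"
    proof -
      have l: "((\<lambda>t. x0 + t *\<^sub>R \<xi>) has_derivative (\<lambda>s. s *\<^sub>R \<xi>)) (at 0)"
        by (auto intro!: derivative_eq_intros)
      have "((\<lambda>t. g (x0 + t *\<^sub>R \<xi>)) has_derivative (\<lambda>s. H x0 *v (s *\<^sub>R \<xi>))) (at 0)"
        by (rule has_derivative_compose[OF l]) (use C x0 in \<open>auto simp: C2_def\<close>)
      then have "((\<lambda>t. g (x0 + t *\<^sub>R \<xi>) \<bullet> \<xi>) has_derivative (\<lambda>s. (H x0 *v (s *\<^sub>R \<xi>)) \<bullet> \<xi>)) (at 0)"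
        by (auto intro!: derivative_eq_intros)
      moreover have "(\<lambda>s. (H x0 *v (s *\<^sub>R \<xi>)) \<bullet> \<xi>) = (*) ((H x0 *v \<xi>) \<bullet> \<xi>)"
        by (rule ext) (simp add: matrix_vector_mult_scaleR)
      ultimately show ?thesis by (simp add: has_field_derivative_def)
    qed
    have "(H x0 *v \<xi>) \<bullet> \<xi> \<le> 0"
      by (rule max_1d[OF d' der der2]) (use inb mx in auto)
    then show ?thesis by (simp add: inner_commute)
  qed
qed



lemma sum_axis_mult: "(\<Sum>i\<in>UNIV. axis a (1::real) $ i * c i) = c a"
proof -
  have "\<And>i. axis a (1::real) $ i * c i = (if a = i then c i else 0)" by (simp add: axis_def)
  then show ?thesis by simp
qed

lemma line_comp:
  fixes f :: "real^'n::finite \<Rightarrow> real"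
  assumes "(f has_derivative (\<lambda>h. \<Sum>i\<in>UNIV. h$i * g i)) (at (c + s *\<^sub>R v))"
  shows "((\<lambda>s. f (c + s *\<^sub>R v)) has_real_derivative (\<Sum>i\<in>UNIV. v$i * g i)) (at s)"
proof -
  have l: "((\<lambda>s. c + s *\<^sub>R v) has_derivative (\<lambda>t. t *\<^sub>R v)) (at s)"
    by (auto intro!: derivative_eq_intros)
  have "((\<lambda>s. f (c + s *\<^sub>R v)) has_derivative (\<lambda>t. \<Sum>i\<in>UNIV. (t *\<^sub>R v)$i * g i)) (at s)"
    by (rule has_derivative_compose[OF l assms])
  moreover have "(\<lambda>t. \<Sum>i\<in>UNIV. (t *\<^sub>R v)$i * g i) = (*) (\<Sum>i\<in>UNIV. v$i * g i)"
    by (rule ext) (simp add: sum_distrib_left mult_ac)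
  ultimately show ?thesis by (simp add: has_field_derivative_def)
qed

lemma mixed_diff:
  fixes f :: "real^'n::finite \<Rightarrow> real"
  assumes df: "\<And>x. x\<in>S \<Longrightarrow> (f has_derivative (\<lambda>h. \<Sum>i\<in>UNIV. h$i * g i x)) (at x)"
    and dg: "\<And>i x. x\<in>S \<Longrightarrow> (g i has_derivative (\<lambda>h. \<Sum>j\<in>UNIV. h$j * G j i x)) (at x)"
    and r: "ball x r \<subseteq> S" and t: "0 < t" "2 * t < r"
  shows "\<exists>p. dist p x \<le> 2 * t \<and>
     f (x + t *\<^sub>R axis i 1 + t *\<^sub>R axis j 1) - f (x + t *\<^sub>R axis i 1) - f (x + t *\<^sub>R axis j 1) + f x
       = t * t * G j i p"
proof -
  let ?a = "axis i (1::real)" and ?b = "axis j (1::real)"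
  have inS: "x + s *\<^sub>R ?a + \<tau> *\<^sub>R ?b \<in> S" if "0 \<le> s" "s \<le> t" "0 \<le> \<tau>" "\<tau> \<le> t" for s \<tau>
  proof -
    have "norm (s *\<^sub>R ?a + \<tau> *\<^sub>R ?b) \<le> norm (s *\<^sub>R ?a) + norm (\<tau> *\<^sub>R ?b)" by (rule norm_triangle_ineq)
    also have "\<dots> \<le> 2 * t" using that by simp
    finally have "norm (s *\<^sub>R ?a + \<tau> *\<^sub>R ?b) < r" using t by simp
    moreover have "dist x (x + (s *\<^sub>R ?a + \<tau> *\<^sub>R ?b)) = norm (s *\<^sub>R ?a + \<tau> *\<^sub>R ?b)"
      by (metis dist_norm norm_minus_commute add_diff_cancel_left')
    ultimately show ?thesis using r by (auto simp: add.assoc)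
  qed
  define \<phi> where "\<phi> s = f (x + t *\<^sub>R ?b + s *\<^sub>R ?a) - f (x + s *\<^sub>R ?a)" for s
  define \<phi>' where "\<phi>' s = g i (x + t *\<^sub>R ?b + s *\<^sub>R ?a) - g i (x + s *\<^sub>R ?a)" for s
  have dphi: "DERIV \<phi> s :> \<phi>' s" if "0 \<le> s" "s \<le> t" for s
  proof -
    have s1: "x + t *\<^sub>R ?b + s *\<^sub>R ?a \<in> S" using inS[of s t] that t by (simp add: algebra_simps)
    have s2: "x + s *\<^sub>R ?a \<in> S" using inS[of s 0] that t by simp
    have "((\<lambda>s. f (x + t *\<^sub>R ?b + s *\<^sub>R ?a)) has_real_derivative (\<Sum>k\<in>UNIV. ?a$k * g k (x + t *\<^sub>R ?b + s *\<^sub>R ?a))) (at s)"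
      by (rule line_comp) (rule df[OF s1])
    moreover have "((\<lambda>s. f (x + s *\<^sub>R ?a)) has_real_derivative (\<Sum>k\<in>UNIV. ?a$k * g k (x + s *\<^sub>R ?a))) (at s)"
      by (rule line_comp) (rule df[OF s2])
    ultimately show ?thesis unfolding \<phi>_def \<phi>'_def
      by (auto intro!: derivative_eq_intros simp: sum_axis_mult)
  qed
  obtain \<sigma> where \<sigma>: "0 < \<sigma>" "\<sigma> < t" and e1: "\<phi> t - \<phi> 0 = (t - 0) * \<phi>' \<sigma>"
    using MVT2[of 0 t \<phi> \<phi>'] t dphi by force
  define \<psi> where "\<psi> \<tau> = g i (x + \<sigma> *\<^sub>R ?a + \<tau> *\<^sub>R ?b)" for \<tau>
  define \<psi>' where "\<psi>' \<tau> = G j i (x + \<sigma> *\<^sub>R ?a + \<tau> *\<^sub>R ?b)" for \<tau>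
  have dpsi: "DERIV \<psi> \<tau> :> \<psi>' \<tau>" if "0 \<le> \<tau>" "\<tau> \<le> t" for \<tau>
  proof -
    have s1: "x + \<sigma> *\<^sub>R ?a + \<tau> *\<^sub>R ?b \<in> S" using inS[of \<sigma> \<tau>] that \<sigma> by simp
    have "((\<lambda>\<tau>. g i (x + \<sigma> *\<^sub>R ?a + \<tau> *\<^sub>R ?b)) has_real_derivative (\<Sum>k\<in>UNIV. ?b$k * G k i (x + \<sigma> *\<^sub>R ?a + \<tau> *\<^sub>R ?b))) (at \<tau>)"
      by (rule line_comp) (rule dg[OF s1])
    then show ?thesis unfolding \<psi>_def \<psi>'_def by (simp add: sum_axis_mult)
  qed
  obtain \<tau> where \<tau>: "0 < \<tau>" "\<tau> < t" and e2: "\<psi> t - \<psi> 0 = (t - 0) * \<psi>' \<tau>"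
    using MVT2[of 0 t \<psi> \<psi>'] t dpsi by force
  define p where "p = x + \<sigma> *\<^sub>R ?a + \<tau> *\<^sub>R ?b"
  have "dist p x \<le> 2 * t"
  proof -
    have "norm (\<sigma> *\<^sub>R ?a + \<tau> *\<^sub>R ?b) \<le> norm (\<sigma> *\<^sub>R ?a) + norm (\<tau> *\<^sub>R ?b)" by (rule norm_triangle_ineq)
    also have "\<dots> \<le> 2 * t" using \<sigma> \<tau> by simp
    finally show ?thesis by (simp add: p_def dist_norm add.assoc)
  qed
  moreover have "\<phi>' \<sigma> = \<psi> t - \<psi> 0" unfolding \<phi>'_def \<psi>_def by (simp add: algebra_simps)
  moreover have "\<phi> t - \<phi> 0 = f (x + t *\<^sub>R ?a + t *\<^sub>R ?b) - f (x + t *\<^sub>R ?a) - f (x + t *\<^sub>R ?b) + f x"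
    unfolding \<phi>_def by (simp add: algebra_simps)
  ultimately show ?thesis using e1 e2 unfolding \<psi>'_def p_def[symmetric] by (intro exI[of _ p]) auto
qed

lemma clairaut:
  fixes f :: "real^'n::finite \<Rightarrow> real"
  assumes S: "open S"
    and df: "\<And>x. x\<in>S \<Longrightarrow> (f has_derivative (\<lambda>h. \<Sum>i\<in>UNIV. h$i * g i x)) (at x)"
    and dg: "\<And>i x. x\<in>S \<Longrightarrow> (g i has_derivative (\<lambda>h. \<Sum>j\<in>UNIV. h$j * G j i x)) (at x)"
    and cG: "\<And>i j. continuous_on S (G j i)"
    and x: "x \<in> S"
  shows "G j i x = G i j x"
proof (rule ccontr)
  assume ne: "G j i x \<noteq> G i j x"
  define e where "e = \<bar>G j i x - G i j x\<bar> / 2"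
  have e: "e > 0" using ne by (simp add: e_def)
  have c1: "isCont (G j i) x" and c2: "isCont (G i j) x"
    using cG S x by (auto simp: continuous_on_eq_continuous_at)
  obtain d1 where d1: "d1 > 0" "\<And>y. dist y x < d1 \<Longrightarrow> dist (G j i y) (G j i x) < e"
    using c1 e unfolding continuous_at_eps_delta by blast
  obtain d2 where d2: "d2 > 0" "\<And>y. dist y x < d2 \<Longrightarrow> dist (G i j y) (G i j x) < e"
    using c2 e unfolding continuous_at_eps_delta by blast
  obtain r where r: "r > 0" "ball x r \<subseteq> S" using S x open_contains_ball by blast
  define t where "t = min (min d1 d2) r / 4"
  have t: "0 < t" "2 * t < r" "2 * t < d1" "2 * t < d2" using d1 d2 r by (auto simp: t_def)
  obtain p where p: "dist p x \<le> 2 * t"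
    "f (x + t *\<^sub>R axis i 1 + t *\<^sub>R axis j 1) - f (x + t *\<^sub>R axis i 1) - f (x + t *\<^sub>R axis j 1) + f x = t * t * G j i p"
    using mixed_diff[OF df dg r(2) t(1,2), of i j] by blast
  obtain q where q: "dist q x \<le> 2 * t"
    "f (x + t *\<^sub>R axis j 1 + t *\<^sub>R axis i 1) - f (x + t *\<^sub>R axis j 1) - f (x + t *\<^sub>R axis i 1) + f x = t * t * G i j q"
    using mixed_diff[OF df dg r(2) t(1,2), of j i] by blast
  have "t * t * G j i p = t * t * G i j q" using p(2) q(2) by (simp add: algebra_simps)
  hence pq: "G j i p = G i j q" using t by simp
  have "dist (G j i p) (G j i x) < e" using d1 p t by simp
  moreover have "dist (G i j q) (G i j x) < e" using d2 q t by simp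
  ultimately have "\<bar>G j i x - G i j x\<bar> < 2 * e" using pq by (simp add: dist_real_def)
  then show False by (simp add: e_def)
qed



definition Dfam :: "nat \<Rightarrow> (('n::finite) list \<Rightarrow> real^'n \<Rightarrow> real) \<Rightarrow> bool" where
  "Dfam k D \<longleftrightarrow> (\<forall>is. length is < k \<longrightarrow> (\<forall>x\<in>ball 0 1. (D is has_derivative (\<lambda>h. \<Sum>i\<in>UNIV. h$i * D (i#is) x)) (at x)))
     \<and> (\<forall>is. length is \<le> k \<longrightarrow> continuous_on (cball 0 1) (D is))"

lemma Ck_Dfam:
  fixes u :: "real^'n::finite \<Rightarrow> real"
  assumes "Ck_on k (cball 0 1) u"
  shows "\<exists>D. Dfam k D \<and> (\<forall>x\<in>cball 0 1. D [] x = u x)"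
proof -
  obtain D :: "'n list \<Rightarrow> real^'n \<Rightarrow> real" where D0: "\<forall>x\<in>cball 0 1. D [] x = u x"
    and Dd: "\<forall>is. length is < k \<longrightarrow> (\<forall>x\<in>cball 0 1.
          (D is has_derivative (\<lambda>h. \<Sum>i\<in>UNIV. h $ i * D (i # is) x)) (at x within cball 0 1))"
    and Dc: "\<forall>is. length is \<le> k \<longrightarrow> continuous_on (cball 0 1) (D is)"
    using assms unfolding Ck_on_def by blast
  have "Dfam k D"
    unfolding Dfam_def
  proof (intro conjI allI impI ballI)
    fix "is" :: "'n list" and x assume l: "length is < k" and x: "(x::real^'n) \<in> ball 0 1"
    have "x \<in> interior (cball 0 1)" using x by simp
    then have eq: "at x within cball 0 1 = at x" by (rule at_within_interior)
    have "x \<in> cball 0 1" using x by auto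
    then have "(D is has_derivative (\<lambda>h. \<Sum>i\<in>UNIV. h $ i * D (i # is) x)) (at x within cball 0 1)"
      using Dd l by blast
    then show "(D is has_derivative (\<lambda>h. \<Sum>i\<in>UNIV. h $ i * D (i # is) x)) (at x)"
      unfolding eq .
  qed (use Dc in auto)
  then show ?thesis using D0 by blast
qed

lemma Dfam_deriv:
  "Dfam k D \<Longrightarrow> length is < k \<Longrightarrow> x \<in> ball 0 1 \<Longrightarrow> (D is has_derivative (\<lambda>h. \<Sum>i\<in>UNIV. h$i * D (i#is) x)) (at x)"
  unfolding Dfam_def by blast

lemma Dfam_cont:
  "Dfam k D \<Longrightarrow> length is \<le> k \<Longrightarrow> continuous_on (cball 0 1) (D is)"
  unfolding Dfam_def by blast

lemma Dfam_swap0: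
  assumes D: "Dfam k D" and l: "length t + 2 \<le> k" and x: "x \<in> ball 0 1"
  shows "D (a#b#t) x = D (b#a#t) x"
proof -
  have "D (a#b#t) x = D (b#a#t) x"
  proof (rule clairaut[where S="ball 0 1" and f="D t" and g="\<lambda>i. D (i#t)" and G="\<lambda>j i. D (j#i#t)"])
    show "\<And>x. x \<in> ball 0 1 \<Longrightarrow> (D t has_derivative (\<lambda>h. \<Sum>i\<in>UNIV. h $ i * D (i # t) x)) (at x)"
      using Dfam_deriv[OF D] l by simp
    show "\<And>i x. x \<in> ball 0 1 \<Longrightarrow> (D (i # t) has_derivative (\<lambda>h. \<Sum>j\<in>UNIV. h $ j * D (j # i # t) x)) (at x)"
      using Dfam_deriv[OF D] l by simp
    fix i j
    have "continuous_on (cball 0 1) (D (j#i#t))" using Dfam_cont[OF D] l by simp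
    then show "continuous_on (ball 0 1) (D (j # i # t))"
      by (rule continuous_on_subset) (rule ball_subset_cball)
  qed (use x in auto)
  then show ?thesis .
qed

lemma Dfam_tail:
  assumes D: "Dfam k D" and l: "length t < k" "length t' < k"
    and eq: "\<And>y. y \<in> ball 0 1 \<Longrightarrow> D t y = D t' y" and x: "x \<in> ball 0 1"
  shows "D (a#t) x = D (a#t') x"
proof -
  have d1: "(D t has_derivative (\<lambda>h. \<Sum>i\<in>UNIV. h$i * D (i#t) x)) (at x)"
    using Dfam_deriv[OF D l(1) x] .
  have "(D t' has_derivative (\<lambda>h. \<Sum>i\<in>UNIV. h$i * D (i#t') x)) (at x)"
    using Dfam_deriv[OF D l(2) x] .
  then have d2: "(D t has_derivative (\<lambda>h. \<Sum>i\<in>UNIV. h$i * D (i#t') x)) (at x)"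
    by (rule has_derivative_transform_within_open[OF _ open_ball x]) (use eq in auto)
  have "(\<lambda>h. \<Sum>i\<in>UNIV. h$i * D (i#t) x) = (\<lambda>h. \<Sum>i\<in>UNIV. h$i * D (i#t') x)"
    by (rule has_derivative_unique[OF d1 d2])
  then have "(\<Sum>i\<in>UNIV. axis a 1 $i * D (i#t) x) = (\<Sum>i\<in>UNIV. axis a 1 $i * D (i#t') x)"
    by metis
  then show ?thesis by (simp add: sum_axis_mult)
qed

lemma Dfam_swap:
  assumes D: "Dfam k D"
  shows "length (l1 @ a # b # l2) \<le> k \<Longrightarrow> x \<in> ball 0 1 \<Longrightarrow> D (l1 @ a # b # l2) x = D (l1 @ b # a # l2) x"
proof (induction l1 arbitrary: x)
  case Nil
  then show ?case using Dfam_swap0[OF D, of l2 x a b] by simp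
next
  case (Cons c l1)
  have "D (c # (l1 @ a # b # l2)) x = D (c # (l1 @ b # a # l2)) x"
    by (rule Dfam_tail[OF D]) (use Cons in auto)
  then show ?case by simp
qed

lemma Dfam_swap_2_01: "Dfam k D \<Longrightarrow> 2 \<le> k \<Longrightarrow> x \<in> ball 0 1 \<Longrightarrow> D [a,b] x = D [b,a] x"
  using Dfam_swap[of k D "[]" a b "[]" x] by simp

lemma Dfam_swap_3_01: "Dfam k D \<Longrightarrow> 3 \<le> k \<Longrightarrow> x \<in> ball 0 1 \<Longrightarrow> D [a,b,c] x = D [b,a,c] x"
  using Dfam_swap[of k D "[]" a b "[c]" x] by simp
lemma Dfam_swap_3_12: "Dfam k D \<Longrightarrow> 3 \<le> k \<Longrightarrow> x \<in> ball 0 1 \<Longrightarrow> D [c,a,b] x = D [c,b,a] x"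
  using Dfam_swap[of k D "[c]" a b "[]" x] by simp

lemma Dfam_swap_4_01: "Dfam k D \<Longrightarrow> 4 \<le> k \<Longrightarrow> x \<in> ball 0 1 \<Longrightarrow> D [a,b,c,d] x = D [b,a,c,d] x"
  using Dfam_swap[of k D "[]" a b "[c,d]" x] by simp
lemma Dfam_swap_4_12: "Dfam k D \<Longrightarrow> 4 \<le> k \<Longrightarrow> x \<in> ball 0 1 \<Longrightarrow> D [c,a,b,d] x = D [c,b,a,d] x"
  using Dfam_swap[of k D "[c]" a b "[d]" x] by simp
lemma Dfam_swap_4_23: "Dfam k D \<Longrightarrow> 4 \<le> k \<Longrightarrow> x \<in> ball 0 1 \<Longrightarrow> D [c,d,a,b] x = D [c,d,b,a] x"
  using Dfam_swap[of k D "[c,d]" a b "[]" x] by simp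

lemma Dfam_rev3: "Dfam k D \<Longrightarrow> 3 \<le> k \<Longrightarrow> x \<in> ball 0 1 \<Longrightarrow> D [a,b,c] x = D [c,b,a] x"
proof -
  assume D: "Dfam k D" and k: "3 \<le> k" and x: "x \<in> ball 0 1"
  have "D [a,b,c] x = D [b,a,c] x" by (rule Dfam_swap_3_01[OF D k x])
  also have "\<dots> = D [b,c,a] x" by (rule Dfam_swap_3_12[OF D k x])
  also have "\<dots> = D [c,b,a] x" by (rule Dfam_swap_3_01[OF D k x])
  finally show ?thesis .
qed

lemma Dfam_rev4: "Dfam k D \<Longrightarrow> 4 \<le> k \<Longrightarrow> x \<in> ball 0 1 \<Longrightarrow> D [a,b,c,d] x = D [d,c,b,a] x"
proof -
  assume D: "Dfam k D" and k: "4 \<le> k" and x: "x \<in> ball 0 1"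
  note s01 = Dfam_swap_4_01[OF D k x] and s12 = Dfam_swap_4_12[OF D k x] and s23 = Dfam_swap_4_23[OF D k x]
  have "D [a,b,c,d] x = D [b,a,c,d] x" by (rule s01)
  also have "\<dots> = D [b,c,a,d] x" by (rule s12)
  also have "\<dots> = D [b,c,d,a] x" by (rule s23)
  also have "\<dots> = D [c,b,d,a] x" by (rule s01)
  also have "\<dots> = D [c,d,b,a] x" by (rule s12)
  also have "\<dots> = D [d,c,b,a] x" by (rule s01)
  finally show ?thesis .
qed



definition Hm :: "(('n::finite) list \<Rightarrow> real^'n \<Rightarrow> real) \<Rightarrow> real^'n \<Rightarrow> 'n mat" where
  "Hm D x = (\<chi> i j. D [i,j] x)"
definition dHm :: "(('n::finite) list \<Rightarrow> real^'n \<Rightarrow> real) \<Rightarrow> real^'n \<Rightarrow> real^'n \<Rightarrow> 'n mat" where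
  "dHm D h x = (\<chi> i j. \<Sum>k\<in>UNIV. h$k * D [k,i,j] x)"
definition d2Hm :: "(('n::finite) list \<Rightarrow> real^'n \<Rightarrow> real) \<Rightarrow> real^'n \<Rightarrow> real^'n \<Rightarrow> real^'n \<Rightarrow> 'n mat" where
  "d2Hm D e h x = (\<chi> i j. \<Sum>k\<in>UNIV. e$k * (\<Sum>m\<in>UNIV. h$m * D [m,k,i,j] x))"

lemma Hm_Sym: assumes D: "Dfam k D" and k: "2 \<le> k" and x: "x \<in> ball 0 1" shows "Hm D x \<in> Sym"
  unfolding Sym_iff Hm_def using Dfam_swap_2_01[OF D k x] by simp

lemma dHm_Sym: assumes D: "Dfam k D" and k: "3 \<le> k" and x: "x \<in> ball 0 1" shows "dHm D h x \<in> Sym"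
  unfolding Sym_iff dHm_def using Dfam_swap_3_12[OF D k x] by simp

lemma Hm_deriv:
  assumes D: "Dfam k D" and k: "3 \<le> k" and x: "x \<in> ball 0 1"
  shows "(Hm D has_derivative (\<lambda>h. dHm D h x)) (at x)"
proof -
  have "((\<lambda>x. \<chi> i. \<chi> j. D [i,j] x) has_derivative (\<lambda>h. \<chi> i. \<chi> j. \<Sum>k\<in>UNIV. h$k * D [k,i,j] x)) (at x)"
  proof (rule vec_lambda_has_derivative)
    fix i
    show "((\<lambda>x. \<chi> j. D [i,j] x) has_derivative (\<lambda>h. \<chi> j. \<Sum>k\<in>UNIV. h$k * D [k,i,j] x)) (at x)"
      by (rule vec_lambda_has_derivative) (use Dfam_deriv[OF D _ x] k in auto)
  qed
  then show ?thesis unfolding Hm_def dHm_def by simp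
qed

lemma dHm_deriv:
  assumes D: "Dfam k D" and k: "4 \<le> k" and x: "x \<in> ball 0 1"
  shows "(dHm D e has_derivative (\<lambda>h. d2Hm D e h x)) (at x)"
proof -
  have "((\<lambda>x. \<chi> i. \<chi> j. \<Sum>k\<in>UNIV. e$k * D [k,i,j] x) has_derivative (\<lambda>h. \<chi> i. \<chi> j. \<Sum>k\<in>UNIV. e$k * (\<Sum>m\<in>UNIV. h$m * D [m,k,i,j] x))) (at x)"
  proof (rule vec_lambda_has_derivative)
    fix i
    show "((\<lambda>x. \<chi> j. \<Sum>k\<in>UNIV. e$k * D [k,i,j] x) has_derivative (\<lambda>h. \<chi> j. \<Sum>k\<in>UNIV. e$k * (\<Sum>m\<in>UNIV. h$m * D [m,k,i,j] x))) (at x)"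
    proof (rule vec_lambda_has_derivative)
      fix j
      show "((\<lambda>x. \<Sum>k\<in>UNIV. e$k * D [k,i,j] x) has_derivative (\<lambda>h. \<Sum>k\<in>UNIV. e$k * (\<Sum>m\<in>UNIV. h$m * D [m,k,i,j] x))) (at x)"
        by (rule has_derivative_sum, rule has_derivative_mult_right) (use Dfam_deriv[OF D _ x] k in auto)
    qed
  qed
  then show ?thesis unfolding dHm_def d2Hm_def by simp
qed

lemma pdiff_at:
  fixes f f0 :: "real^'n::finite \<Rightarrow> real"
  assumes U: "open U" and x: "x \<in> U" and eq: "\<And>y. y \<in> U \<Longrightarrow> f y = f0 y"
    and d: "(f0 has_derivative (\<lambda>h. \<Sum>k\<in>UNIV. h$k * g k)) (at x)"
  shows "pdiff i f x = g i"
proof -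
  obtain r where r: "r > 0" "ball x r \<subseteq> U" using U x open_contains_ball by blast
  have "((\<lambda>t. f0 (x + t *\<^sub>R axis i 1)) has_real_derivative (\<Sum>k\<in>UNIV. axis i 1 $ k * g k)) (at 0)"
    by (rule line_comp) (use d in simp)
  then have d1: "((\<lambda>t. f0 (x + t *\<^sub>R axis i 1)) has_derivative (*) (g i)) (at 0)"
    by (simp add: sum_axis_mult has_field_derivative_def)
  have "((\<lambda>t. f (x + t *\<^sub>R axis i 1)) has_derivative (*) (g i)) (at 0)"
  proof (rule has_derivative_transform_within_open[OF d1 open_ball[of 0 r]])
    show "0 \<in> ball (0::real) r" using r by simp
    fix t :: real assume "t \<in> ball 0 r"
    then have "x + t *\<^sub>R axis i 1 \<in> ball x r" by (simp add: dist_norm)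
    then show "f0 (x + t *\<^sub>R axis i 1) = f (x + t *\<^sub>R axis i 1)" using eq r by auto
  qed
  then have "((\<lambda>t. f (x + t *\<^sub>R axis i 1)) has_real_derivative g i) (at 0)"
    by (simp add: has_field_derivative_def)
  then show ?thesis unfolding pdiff_def by (rule DERIV_imp_deriv)
qed

lemma pdiff_D:
  assumes D: "Dfam k D" and k: "length t < k" and x: "x \<in> ball 0 1"
    and eq: "\<And>y. y \<in> ball 0 1 \<Longrightarrow> f y = D t y"
  shows "pdiff i f x = D (i#t) x"
  by (rule pdiff_at[OF open_ball x eq Dfam_deriv[OF D k x]])

lemma grad_eq:
  assumes D: "Dfam k D" and k: "1 \<le> k" and u: "\<forall>y\<in>cball 0 1. D [] y = u y" and x: "x \<in> ball 0 1"
  shows "grad u x = (\<chi> i. D [i] x)"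
  unfolding grad_def using pdiff_D[OF D _ x, of "[]" u] k u by auto

lemma hess_eq:
  assumes D: "Dfam k D" and k: "2 \<le> k" and u: "\<forall>y\<in>cball 0 1. D [] y = u y" and x: "x \<in> ball 0 1"
  shows "hess u x = Hm D x"
proof -
  have p1: "pdiff j u y = D [j] y" if "y \<in> ball 0 1" for j y
    using pdiff_D[OF D _ that, of "[]" u] k u by auto
  have "pdiff i (pdiff j u) x = D [i,j] x" for i j
    using pdiff_D[OF D _ x, of "[j]" "pdiff j u" i] k p1 by auto
  then show ?thesis unfolding hess_def Hm_def by simp
qed

lemma eqn_first:
  fixes F :: "('n::finite) mat \<Rightarrow> real"
  assumes D: "Dfam k D" and k: "3 \<le> k" and u: "\<forall>y\<in>cball 0 1. D [] y = u y"
    and eq: "\<forall>y\<in>ball 0 1. F (hess u y) = 0"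
    and DF: "\<forall>M\<in>Sym. (F has_derivative blinfun_apply (F' M)) (at M within Sym)"
    and x: "x \<in> ball 0 1"
  shows "blinfun_apply (F' (Hm D x)) (dHm D h x) = 0"
proof -
  have sub: "Hm D ` ball 0 1 \<subseteq> Sym" using Hm_Sym[OF D] k by auto
  have "((\<lambda>y. F (Hm D y)) has_derivative (\<lambda>h. blinfun_apply (F' (Hm D x)) (dHm D h x))) (at x within ball 0 1)"
    by (rule has_derivative_in_compose2[OF _ sub x has_derivative_at_withinI[OF Hm_deriv[OF D k x]]])
       (use DF in auto)
  then have d1: "((\<lambda>y. F (Hm D y)) has_derivative (\<lambda>h. blinfun_apply (F' (Hm D x)) (dHm D h x))) (at x)"
    using at_within_open[OF x open_ball] by simp
  have "((\<lambda>y. 0::real) has_derivative (\<lambda>h. 0)) (at x)" by simp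
  then have d2: "((\<lambda>y. F (Hm D y)) has_derivative (\<lambda>h. 0)) (at x)"
  proof (rule has_derivative_transform_within_open[OF _ open_ball x])
    fix y assume "y \<in> ball (0::real^'n) 1"
    then show "0 = F (Hm D y)" using eq hess_eq[OF D _ u] k by auto
  qed
  have "(\<lambda>h. blinfun_apply (F' (Hm D x)) (dHm D h x)) = (\<lambda>h. 0)"
    by (rule has_derivative_unique[OF d1 d2])
  then show ?thesis by metis
qed

lemma eqn_second:
  fixes F :: "('n::finite) mat \<Rightarrow> real"
  assumes D: "Dfam k D" and k: "4 \<le> k" and u: "\<forall>y\<in>cball 0 1. D [] y = u y"
    and eq: "\<forall>y\<in>ball 0 1. F (hess u y) = 0"
    and qc: "quasiconcave F"
    and DF: "\<forall>M\<in>Sym. (F has_derivative blinfun_apply (F' M)) (at M within Sym)"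
    and DF2: "\<forall>M\<in>Sym. (F' has_derivative blinfun_apply (F'' M)) (at M within Sym)"
    and x: "x \<in> ball 0 1"
  shows "0 \<le> blinfun_apply (F' (Hm D x)) (d2Hm D e e x)"
proof -
  have k3: "3 \<le> k" using k by simp
  have sub: "Hm D ` ball 0 1 \<subseteq> Sym" using Hm_Sym[OF D] k by auto
  have "((\<lambda>y. F' (Hm D y)) has_derivative (\<lambda>h. blinfun_apply (F'' (Hm D x)) (dHm D h x))) (at x within ball 0 1)"
    by (rule has_derivative_in_compose2[OF _ sub x has_derivative_at_withinI[OF Hm_deriv[OF D k3 x]]])
       (use DF2 in auto)
  then have dA: "((\<lambda>y. F' (Hm D y)) has_derivative (\<lambda>h. blinfun_apply (F'' (Hm D x)) (dHm D h x))) (at x)"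
    using at_within_open[OF x open_ball] by simp
  have d1: "((\<lambda>y. blinfun_apply (F' (Hm D y)) (dHm D e y)) has_derivative
      (\<lambda>h. blinfun_apply (F' (Hm D x)) (d2Hm D e h x) + blinfun_apply (blinfun_apply (F'' (Hm D x)) (dHm D h x)) (dHm D e x))) (at x)"
    by (rule blinfun.FDERIV[OF dA dHm_deriv[OF D k x]])
  have "((\<lambda>y. 0::real) has_derivative (\<lambda>h. 0)) (at x)" by simp
  then have d2: "((\<lambda>y. blinfun_apply (F' (Hm D y)) (dHm D e y)) has_derivative (\<lambda>h. 0)) (at x)"
  proof (rule has_derivative_transform_within_open[OF _ open_ball x])
    fix y assume "y \<in> ball (0::real^'n) 1"
    then show "0 = blinfun_apply (F' (Hm D y)) (dHm D e y)"
      using eqn_first[OF D k3 u eq DF] by simp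
  qed
  have "(\<lambda>h. blinfun_apply (F' (Hm D x)) (d2Hm D e h x) + blinfun_apply (blinfun_apply (F'' (Hm D x)) (dHm D h x)) (dHm D e x)) = (\<lambda>h. 0)"
    by (rule has_derivative_unique[OF d1 d2])
  then have s: "blinfun_apply (F' (Hm D x)) (d2Hm D e e x) + blinfun_apply (blinfun_apply (F'' (Hm D x)) (dHm D e x)) (dHm D e x) = 0"
    by metis
  have "blinfun_apply (blinfun_apply (F'' (Hm D x)) (dHm D e x)) (dHm D e x) \<le> 0"
    by (rule qc_second_order[OF qc DF DF2 Hm_Sym[OF D _ x] dHm_Sym[OF D k3 x]])
       (use k eqn_first[OF D k3 u eq DF x] in auto)
  then show ?thesis using s by linarith
qed



definition eta :: "real^'n::finite \<Rightarrow> real" where "eta x = 1 - x \<bullet> x"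
definition geta :: "real^'n::finite \<Rightarrow> real^'n" where "geta x = (-2) *\<^sub>R x"
definition Heta :: "real^'n::finite \<Rightarrow> real^'n^'n" where "Heta x = (-2) *\<^sub>R mat 1"
definition gD :: "(('n::finite) list \<Rightarrow> real^'n \<Rightarrow> real) \<Rightarrow> 'n list \<Rightarrow> real^'n \<Rightarrow> real^'n" where
  "gD D t x = (\<chi> i. D (i#t) x)"
definition HD :: "(('n::finite) list \<Rightarrow> real^'n \<Rightarrow> real) \<Rightarrow> 'n list \<Rightarrow> real^'n \<Rightarrow> real^'n^'n" where
  "HD D t x = (\<chi> i j. D (j#i#t) x)"

lemma C2_mono: "C2 f g H S \<Longrightarrow> T \<subseteq> S \<Longrightarrow> C2 f g H T"
  unfolding C2_def by blast

lemma C2_eq: "C2 f g H S \<Longrightarrow> f = f' \<Longrightarrow> g = g' \<Longrightarrow> H = H' \<Longrightarrow> C2 f' g' H' S"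
  by simp

lemma C2_eta: "C2 eta geta Heta S"
  unfolding C2_def
proof (intro ballI conjI)
  fix x :: "real^'a"
  have "((\<lambda>x. 1 - x \<bullet> x) has_derivative (\<lambda>h. 0 - (h \<bullet> x + x \<bullet> h))) (at x)"
    by (auto intro!: derivative_eq_intros)
  moreover have "(\<lambda>h. 0 - (h \<bullet> x + x \<bullet> h)) = (\<lambda>h. geta x \<bullet> h)"
    by (rule ext) (simp add: geta_def inner_commute)
  ultimately show "(eta has_derivative (\<lambda>h. geta x \<bullet> h)) (at x)"
    unfolding eta_def[abs_def] by simp
  have "((\<lambda>x. (-2) *\<^sub>R x) has_derivative (\<lambda>h. (-2) *\<^sub>R h)) (at x)"
    by (auto intro!: derivative_eq_intros)
  moreover have "(\<lambda>h. (-2) *\<^sub>R h) = (\<lambda>h. Heta x *v h)"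
    by (rule ext) (simp only: Heta_def scaleR_matrix_vector_assoc[symmetric] matrix_vector_mul_lid)
  ultimately show "(geta has_derivative (\<lambda>h. Heta x *v h)) (at x)"
    unfolding geta_def[abs_def] by simp
qed

lemma C2_D:
  assumes D: "Dfam k D" and l: "length t + 2 \<le> k"
  shows "C2 (D t) (gD D t) (HD D t) (ball 0 1)"
  unfolding C2_def
proof (intro ballI conjI)
  fix x :: "real^'a" assume x: "x \<in> ball 0 1"
  have "(D t has_derivative (\<lambda>h. \<Sum>i\<in>UNIV. h$i * D (i#t) x)) (at x)"
    using Dfam_deriv[OF D _ x] l by simp
  moreover have "(\<lambda>h. \<Sum>i\<in>UNIV. h$i * D (i#t) x) = (\<lambda>h. gD D t x \<bullet> h)"
    by (rule ext) (simp add: gD_def inner_vec_def mult.commute)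
  ultimately show "(D t has_derivative (\<lambda>h. gD D t x \<bullet> h)) (at x)" by simp
  have "((\<lambda>x. \<chi> i. D (i#t) x) has_derivative (\<lambda>h. \<chi> i. \<Sum>j\<in>UNIV. h$j * D (j#i#t) x)) (at x)"
    by (rule vec_lambda_has_derivative) (use Dfam_deriv[OF D _ x] l in auto)
  moreover have "(\<lambda>h. \<chi> i. \<Sum>j\<in>UNIV. h$j * D (j#i#t) x) = (\<lambda>h. HD D t x *v h)"
    by (rule ext) (simp add: HD_def matrix_vector_mult_def mult.commute)
  ultimately show "(gD D t has_derivative (\<lambda>h. HD D t x *v h)) (at x)"
    unfolding gD_def[abs_def] by simp
qed

lemma ls_mult_H:
  "ls L (f1 *\<^sub>R H2 + f2 *\<^sub>R H1 + outer g2 g1 + outer g1 g2) = f1 * ls L H2 + f2 * ls L H1 + 2 * ls L (outer g1 g2)"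
  by (simp add: ls_add ls_scaleR ls_outer_swap[of L g2 g1])

lemma ls_Q_scale: "ls L (outer (a *\<^sub>R v) (b *\<^sub>R w)) = a * b * ls L (outer v w)"
  by (simp add: outer_scaleR_left outer_scaleR_right ls_scaleR)



definition zeta :: "real^'n::finite \<Rightarrow> real" where "zeta x = eta x * eta x"
definition gzeta :: "real^'n::finite \<Rightarrow> real^'n" where "gzeta x = eta x *\<^sub>R geta x + eta x *\<^sub>R geta x"
definition Hzeta :: "real^'n::finite \<Rightarrow> real^'n^'n" where
  "Hzeta x = eta x *\<^sub>R Heta x + eta x *\<^sub>R Heta x + outer (geta x) (geta x) + outer (geta x) (geta x)"

definition Sf :: "(('n::finite) list \<Rightarrow> real^'n \<Rightarrow> real) \<Rightarrow> real^'n \<Rightarrow> real" where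
  "Sf D x = (\<Sum>m\<in>UNIV. D [m] x * D [m] x)"
definition gS :: "(('n::finite) list \<Rightarrow> real^'n \<Rightarrow> real) \<Rightarrow> real^'n \<Rightarrow> real^'n" where
  "gS D x = (\<Sum>m\<in>UNIV. D [m] x *\<^sub>R gD D [m] x + D [m] x *\<^sub>R gD D [m] x)"
definition HS :: "(('n::finite) list \<Rightarrow> real^'n \<Rightarrow> real) \<Rightarrow> real^'n \<Rightarrow> real^'n^'n" where
  "HS D x = (\<Sum>m\<in>UNIV. D [m] x *\<^sub>R HD D [m] x + D [m] x *\<^sub>R HD D [m] x
       + outer (gD D [m] x) (gD D [m] x) + outer (gD D [m] x) (gD D [m] x))"

definition ut :: "(('n::finite) list \<Rightarrow> real^'n \<Rightarrow> real) \<Rightarrow> real \<Rightarrow> real^'n \<Rightarrow> real" where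
  "ut D c x = D [] x - c"

definition W0 :: "(('n::finite) list \<Rightarrow> real^'n \<Rightarrow> real) \<Rightarrow> real \<Rightarrow> real \<Rightarrow> real^'n \<Rightarrow> real" where
  "W0 D c B x = zeta x * Sf D x + B * (ut D c x * ut D c x)"
definition gW0 :: "(('n::finite) list \<Rightarrow> real^'n \<Rightarrow> real) \<Rightarrow> real \<Rightarrow> real \<Rightarrow> real^'n \<Rightarrow> real^'n" where
  "gW0 D c B x = zeta x *\<^sub>R gS D x + Sf D x *\<^sub>R gzeta x
     + B *\<^sub>R (ut D c x *\<^sub>R gD D [] x + ut D c x *\<^sub>R gD D [] x)"
definition HW0 :: "(('n::finite) list \<Rightarrow> real^'n \<Rightarrow> real) \<Rightarrow> real \<Rightarrow> real \<Rightarrow> real^'n \<Rightarrow> real^'n^'n" where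
  "HW0 D c B x = zeta x *\<^sub>R HS D x + Sf D x *\<^sub>R Hzeta x + outer (gS D x) (gzeta x) + outer (gzeta x) (gS D x)
     + B *\<^sub>R (ut D c x *\<^sub>R HD D [] x + ut D c x *\<^sub>R HD D [] x + outer (gD D [] x) (gD D [] x) + outer (gD D [] x) (gD D [] x))"

lemma C2_zeta: "C2 zeta gzeta Hzeta S"
proof -
  have "C2 (\<lambda>x. eta x * eta x) (\<lambda>x. eta x *\<^sub>R geta x + eta x *\<^sub>R geta x)
     (\<lambda>x. eta x *\<^sub>R Heta x + eta x *\<^sub>R Heta x + outer (geta x) (geta x) + outer (geta x) (geta x)) S"
    by (rule C2_mult[OF C2_eta C2_eta])
  then show ?thesis unfolding zeta_def[abs_def] gzeta_def[abs_def] Hzeta_def[abs_def] .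
qed

lemma C2_S:
  assumes D: "Dfam k D" and k: "3 \<le> k"
  shows "C2 (Sf D) (gS D) (HS D) (ball 0 1)"
proof -
  have "C2 (\<lambda>x. \<Sum>m\<in>UNIV. D [m] x * D [m] x) (\<lambda>x. \<Sum>m\<in>UNIV. D [m] x *\<^sub>R gD D [m] x + D [m] x *\<^sub>R gD D [m] x)
     (\<lambda>x. \<Sum>m\<in>UNIV. D [m] x *\<^sub>R HD D [m] x + D [m] x *\<^sub>R HD D [m] x
       + outer (gD D [m] x) (gD D [m] x) + outer (gD D [m] x) (gD D [m] x)) (ball 0 1)"
  proof (rule C2_sum)
    fix m :: 'a
    have l: "length [m] + 2 \<le> k" using k by simp
    show "C2 (\<lambda>x. D [m] x * D [m] x) (\<lambda>x. D [m] x *\<^sub>R gD D [m] x + D [m] x *\<^sub>R gD D [m] x)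
       (\<lambda>x. D [m] x *\<^sub>R HD D [m] x + D [m] x *\<^sub>R HD D [m] x + outer (gD D [m] x) (gD D [m] x) + outer (gD D [m] x) (gD D [m] x)) (ball 0 1)"
      by (rule C2_mult[OF C2_D[OF D l] C2_D[OF D l]])
  qed simp
  then show ?thesis unfolding Sf_def[abs_def] gS_def[abs_def] HS_def[abs_def] .
qed

lemma C2_ut:
  assumes D: "Dfam k D" and k: "2 \<le> k"
  shows "C2 (ut D c) (gD D []) (HD D []) (ball 0 1)"
proof -
  have "C2 (\<lambda>x. D [] x + (- c)) (\<lambda>x. gD D [] x + 0) (\<lambda>x. HD D [] x + 0) (ball 0 1)"
    by (rule C2_add[OF C2_D[OF D] C2_const]) (use k in simp)
  then show ?thesis unfolding ut_def[abs_def] by simp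
qed

lemma C2_W0:
  assumes D: "Dfam k D" and k: "3 \<le> k"
  shows "C2 (W0 D c B) (gW0 D c B) (HW0 D c B) (ball 0 1)"
proof -
  have "C2 (\<lambda>x. zeta x * Sf D x + B * (ut D c x * ut D c x))
     (\<lambda>x. (zeta x *\<^sub>R gS D x + Sf D x *\<^sub>R gzeta x) + B *\<^sub>R (ut D c x *\<^sub>R gD D [] x + ut D c x *\<^sub>R gD D [] x))
     (\<lambda>x. (zeta x *\<^sub>R HS D x + Sf D x *\<^sub>R Hzeta x + outer (gS D x) (gzeta x) + outer (gzeta x) (gS D x))
     + B *\<^sub>R (ut D c x *\<^sub>R HD D [] x + ut D c x *\<^sub>R HD D [] x + outer (gD D [] x) (gD D [] x) + outer (gD D [] x) (gD D [] x))) (ball 0 1)"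
    by (rule C2_add[OF C2_mult[OF C2_zeta C2_S[OF D k]] C2_scale[OF C2_mult[OF C2_ut C2_ut]]]) (use k D in auto)
  then show ?thesis unfolding W0_def[abs_def] gW0_def[abs_def] HW0_def[abs_def] by (simp add: add.assoc)
qed

lemma ls_Hzeta: "ls L (Hzeta x) = 2 * eta x * ls L (Heta x) + 2 * ls L (outer (geta x) (geta x))"
  unfolding Hzeta_def ls_mult_H by simp

lemma ls_Heta: "ls L (Heta x) = -2 * ls L (mat 1)"
  unfolding Heta_def ls_scaleR by simp

lemma ls_HS: "ls L (HS D x) = (\<Sum>m\<in>UNIV. 2 * D [m] x * ls L (HD D [m] x) + 2 * ls L (outer (gD D [m] x) (gD D [m] x)))"
  unfolding HS_def ls_sum ls_mult_H by (simp add: mult.assoc)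

lemma ls_cross: "ls L (outer (gzeta x) (gS D x)) = (\<Sum>m\<in>UNIV. 4 * (eta x * D [m] x) * ls L (outer (geta x) (gD D [m] x)))"
proof -
  have a: "gzeta x = (2 * eta x) *\<^sub>R geta x" by (simp add: gzeta_def scaleR_2[symmetric] )
  have b: "gS D x = (\<Sum>m\<in>UNIV. (2 * D [m] x) *\<^sub>R gD D [m] x)" by (simp add: gS_def scaleR_2[symmetric])
  show ?thesis unfolding a b outer_sum_right ls_sum ls_Q_scale by (simp add: mult_ac)
qed

lemma ls_HW0: "ls L (HW0 D c B x) = zeta x * ls L (HS D x) + Sf D x * ls L (Hzeta x) + 2 * ls L (outer (gzeta x) (gS D x))
    + B * (2 * ut D c x * ls L (HD D [] x) + 2 * ls L (outer (gD D [] x) (gD D [] x)))"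
proof -
  have "ls L (HW0 D c B x) = ls L (zeta x *\<^sub>R HS D x + Sf D x *\<^sub>R Hzeta x + outer (gS D x) (gzeta x) + outer (gzeta x) (gS D x))
     + B * ls L (ut D c x *\<^sub>R HD D [] x + ut D c x *\<^sub>R HD D [] x + outer (gD D [] x) (gD D [] x) + outer (gD D [] x) (gD D [] x))"
    unfolding HW0_def ls_add ls_scaleR by simp
  also have "\<dots> = zeta x * ls L (HS D x) + Sf D x * ls L (Hzeta x) + 2 * ls L (outer (gzeta x) (gS D x))
    + B * (2 * ut D c x * ls L (HD D [] x) + 2 * ls L (outer (gD D [] x) (gD D [] x)))"
    unfolding ls_mult_H by simp
  finally show ?thesis .
qed



lemma eta_bounds: "x \<in> cball (0::real^'n::finite) 1 \<Longrightarrow> 0 \<le> eta x \<and> eta x \<le> 1"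
proof -
  assume "x \<in> cball 0 1"
  then have "norm x \<le> 1" by simp
  then have "(norm x)^2 \<le> 1" by (simp add: power_le_one)
  then show ?thesis by (simp add: eta_def power2_norm_eq_inner[symmetric])
qed

lemma eta_pos: "x \<in> ball (0::real^'n::finite) 1 \<Longrightarrow> 0 < eta x"
proof -
  assume "x \<in> ball 0 1"
  then have "norm x < 1" by simp
  then have "(norm x)^2 < 1" by (simp add: power_less_one_iff abs_less_iff)
  then show ?thesis by (simp add: eta_def power2_norm_eq_inner[symmetric])
qed

lemma Qeta_upper:
  assumes ell: "ellop lam Lam L" and lam: "0 < lam" "lam \<le> Lam" and x: "x \<in> cball (0::real^'n::finite) 1"
  shows "ls L (outer (geta x) (geta x)) \<le> 4 * Lam"
proof -
  have "ls L (outer (geta x) (geta x)) \<le> Lam * (norm (geta x))^2" by (rule ls_Q_upper[OF ell])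
  also have "(norm (geta x))^2 = 4 * (norm x)^2" by (simp add: geta_def power_mult_distrib)
  also have "Lam * (4 * (norm x)^2) \<le> Lam * 4"
    using x lam by (intro mult_left_mono) (auto simp: power_le_one)
  finally show ?thesis by simp
qed

lemma norm_gD0: "(norm (gD D [] x))^2 = Sf D x"
  by (simp add: power2_norm_eq_inner inner_vec_def gD_def Sf_def)

lemma W0_lower:
  fixes D :: "('n::finite) list \<Rightarrow> real^'n \<Rightarrow> real"
  assumes ell: "ellop lam Lam L" and lam: "0 < lam" "lam \<le> Lam" and x: "x \<in> ball 0 1"
    and Lm: "\<And>m. ls L (HD D [m] x) = 0"
    and Lu: "0 \<le> ut D c x * ls L (HD D [] x)"
    and B: "0 \<le> B"
  shows "zeta x * (\<Sum>m\<in>UNIV. ls L (outer (gD D [m] x) (gD D [m] x))) + (2 * B * lam - 60 * Lam) * Sf D x \<le> ls L (HW0 D c B x)"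
proof -
  define e where "e = eta x"
  define lsI where "lsI = ls L (mat 1)"
  define Qe where "Qe = ls L (outer (geta x) (geta x))"
  define q where "q m = ls L (outer (gD D [m] x) (gD D [m] x))" for m
  define b where "b m = ls L (outer (geta x) (gD D [m] x))" for m
  define sq where "sq = (\<Sum>m\<in>UNIV. q m)"
  define S where "S = Sf D x"
  define X where "X = (\<Sum>m\<in>UNIV. 4 * (e * D [m] x) * b m)"
  define Q0 where "Q0 = ls L (outer (gD D [] x) (gD D [] x))"
  define U0 where "U0 = ut D c x * ls L (HD D [] x)"
  have lam0: "0 \<le> lam" using lam by simp
  have e: "0 \<le> e" "e \<le> 1" using eta_bounds[of x] x by (auto simp: e_def)
  have I: "lam \<le> lsI" "lsI \<le> Lam" using ls_id_lower[OF ell] ls_id_upper[OF ell] by (auto simp: lsI_def)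
  have Qe: "0 \<le> Qe" "Qe \<le> 4 * Lam"
    using ls_Q_nonneg[OF ell lam0] Qeta_upper[OF ell lam, of x] x by (auto simp: Qe_def)
  have q: "0 \<le> q m" for m using ls_Q_nonneg[OF ell lam0] by (simp add: q_def)
  have sq: "0 \<le> sq" unfolding sq_def by (rule sum_nonneg) (use q in auto)
  have S: "0 \<le> S" unfolding S_def Sf_def by (rule sum_nonneg) auto
  have hS: "ls L (HS D x) = 2 * sq"
    by (simp add: ls_HS Lm sq_def q_def sum_distrib_left)
  have hZ: "ls L (Hzeta x) = -4 * (e * lsI) + 2 * Qe"
    by (simp add: ls_Hzeta ls_Heta e_def lsI_def Qe_def)
  have hX: "ls L (outer (gzeta x) (gS D x)) = X"
    by (simp add: ls_cross X_def e_def b_def)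
  have tot: "ls L (HW0 D c B x) = (e * e) * (2 * sq) + S * (-4 * (e * lsI) + 2 * Qe) + 2 * X + B * (2 * U0 + 2 * Q0)"
    unfolding ls_HW0 hS hZ hX by (simp add: zeta_def e_def S_def U0_def Q0_def)
  have cross_m: "- (16 * (D [m] x * D [m] x) * Qe + e * e * q m) \<le> 2 * (4 * (e * D [m] x) * b m)" for m
  proof -
    have "- (ls L (outer ((4 * D [m] x) *\<^sub>R geta x) ((4 * D [m] x) *\<^sub>R geta x))
            + ls L (outer (e *\<^sub>R gD D [m] x) (e *\<^sub>R gD D [m] x)))
          \<le> 2 * ls L (outer ((4 * D [m] x) *\<^sub>R geta x) (e *\<^sub>R gD D [m] x))"
      by (rule ls_B_lower[OF ell lam0])
    then show ?thesis unfolding ls_Q_scale by (simp add: Qe_def q_def b_def mult_ac)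
  qed
  have cross: "- (16 * (S * Qe) + e * e * sq) \<le> 2 * X"
  proof -
    have "(\<Sum>m\<in>UNIV. - (16 * (D [m] x * D [m] x) * Qe + e * e * q m)) \<le> (\<Sum>m\<in>UNIV. 2 * (4 * (e * D [m] x) * b m))"
      by (rule sum_mono) (rule cross_m)
    moreover have "(\<Sum>m\<in>UNIV. - (16 * (D [m] x * D [m] x) * Qe + e * e * q m)) = - (16 * (S * Qe) + e * e * sq)"
      by (simp add: S_def Sf_def sq_def sum_negf sum_subtractf sum.distrib sum_distrib_left sum_distrib_right mult_ac)
    moreover have "(\<Sum>m\<in>UNIV. 2 * (4 * (e * D [m] x) * b m)) = 2 * X"
      by (simp add: X_def sum_distrib_left)
    ultimately show ?thesis by simp
  qed
  have eI: "e * lsI \<le> Lam" using e I mult_mono[of e 1 lsI Lam] lam by simp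
  have SeI: "S * (e * lsI) \<le> S * Lam" by (rule mult_left_mono[OF eI S])
  have SQe: "S * Qe \<le> S * (4 * Lam)" by (rule mult_left_mono[OF Qe(2) S])
  have esq: "0 \<le> e * e * sq" using e sq by simp
  have Q0: "lam * S \<le> Q0" using ls_Q_lower[OF ell, of "gD D [] x"] by (simp add: Q0_def S_def norm_gD0)
  have BQ0: "B * (lam * S) \<le> B * Q0" by (rule mult_left_mono[OF Q0 B])
  have BU0: "0 \<le> B * U0" using B Lu by (simp add: U0_def)
  have "ls L (HW0 D c B x) = 2 * (e * e * sq) - 4 * (S * (e * lsI)) + 2 * (S * Qe) + 2 * X + 2 * (B * U0) + 2 * (B * Q0)"
    unfolding tot by (simp add: algebra_simps)
  moreover have "(2 * B * lam - 60 * Lam) * S = 2 * (B * (lam * S)) - 4 * (S * Lam) - 14 * (S * (4 * Lam))"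
    by (simp add: algebra_simps)
  moreover have "zeta x * (\<Sum>m\<in>UNIV. ls L (outer (gD D [m] x) (gD D [m] x))) = e * e * sq"
    by (simp add: zeta_def e_def sq_def q_def)
  ultimately show ?thesis unfolding S_def[symmetric] using cross SeI SQe esq BQ0 BU0 by linarith
qed



lemma cont_eta: "continuous_on S eta"
  unfolding eta_def[abs_def] by (intro continuous_intros)

lemma cont_Dm:
  assumes D: "Dfam k D" and "length t \<le> k"
  shows "continuous_on (cball 0 1) (D t)"
  by (rule Dfam_cont[OF D assms(2)])

lemma cont_W0:
  assumes D: "Dfam k D" and k: "1 \<le> k"
  shows "continuous_on (cball 0 1) (W0 D c B)"
proof -
  have c0: "continuous_on (cball 0 1) (D [])" using Dfam_cont[OF D] by simp
  have c1: "continuous_on (cball 0 1) (D [m])" for m using Dfam_cont[OF D] k by simp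
  show ?thesis
    unfolding W0_def[abs_def] zeta_def Sf_def ut_def
    by (intro continuous_intros cont_eta c0 c1)
qed

lemma max_in_cball:
  fixes f :: "real^'n::finite \<Rightarrow> real"
  assumes "continuous_on (cball 0 1) f"
  obtains x1 where "x1 \<in> cball 0 1" "\<And>y. y \<in> cball 0 1 \<Longrightarrow> f y \<le> f x1"
proof -
  have "cball (0::real^'n) 1 \<noteq> {}" by (metis centre_in_cball zero_less_one order_less_imp_le empty_iff)
  from continuous_attains_sup[OF compact_cball this assms] obtain x where "x \<in> cball 0 1" "\<forall>y\<in>cball 0 1. f y \<le> f x"
    by blast
  then show ?thesis using that by blast
qed

lemma interior_ball_sub:
  assumes "x1 \<in> ball (0::real^'n::finite) 1"
  shows "0 < 1 - norm x1" "ball x1 (1 - norm x1) \<subseteq> cball 0 1"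
proof -
  show "0 < 1 - norm x1" using assms by simp
  show "ball x1 (1 - norm x1) \<subseteq> cball 0 1"
  proof
    fix y assume "y \<in> ball x1 (1 - norm x1)"
    then have "norm (y - x1) < 1 - norm x1" by (simp add: dist_norm norm_minus_commute)
    moreover have "norm y \<le> norm x1 + norm (y - x1)" using norm_triangle_ineq[of x1 "y - x1"] by simp
    ultimately show "y \<in> cball 0 1" by simp
  qed
qed

lemma eta_sphere: "x \<in> cball (0::real^'n::finite) 1 \<Longrightarrow> x \<notin> ball 0 1 \<Longrightarrow> eta x = 0"
proof -
  assume "x \<in> cball 0 1" "x \<notin> ball 0 1"
  then have "norm x = 1" by simp
  then have "x \<bullet> x = 1" by (metis norm_eq_1)
  then show ?thesis by (simp add: eta_def)
qed

lemma W0_bound: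
  fixes D :: "('n::finite) list \<Rightarrow> real^'n \<Rightarrow> real"
  assumes D: "Dfam k D" and k: "3 \<le> k"
    and ell: "\<And>x. x \<in> ball 0 1 \<Longrightarrow> ellop lam Lam (L x)" and lam: "0 < lam" "lam \<le> Lam"
    and Lm: "\<And>x m. x \<in> ball 0 1 \<Longrightarrow> ls (L x) (HD D [m] x) = 0"
    and Lu: "\<And>x. x \<in> ball 0 1 \<Longrightarrow> 0 \<le> ut D c x * ls (L x) (HD D [] x)"
    and R: "\<And>x. x \<in> cball 0 1 \<Longrightarrow> ut D c x * ut D c x \<le> R"
    and B: "B = 30 * Lam / lam + 1"
    and y: "y \<in> cball 0 1"
  shows "W0 D c B y \<le> B * R"
proof -
  have B0: "0 \<le> B" using lam by (simp add: B)
  have Blam: "2 * B * lam - 60 * Lam = 2 * lam" using lam by (simp add: B field_simps)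
  have cW: "continuous_on (cball 0 1) (W0 D c B)" by (rule cont_W0[OF D]) (use k in simp)
  obtain x1 where x1: "x1 \<in> cball 0 1" and mx: "\<And>y. y \<in> cball 0 1 \<Longrightarrow> W0 D c B y \<le> W0 D c B x1"
    using max_in_cball[OF cW] by blast
  have "W0 D c B x1 \<le> B * R"
  proof (cases "x1 \<in> ball 0 1 \<and> Sf D x1 \<noteq> 0")
    case False
    then have "zeta x1 * Sf D x1 = 0" using eta_sphere[OF x1] by (auto simp: zeta_def)
    then have "W0 D c B x1 = B * (ut D c x1 * ut D c x1)" by (simp add: W0_def)
    also have "\<dots> \<le> B * R" by (rule mult_left_mono[OF R[OF x1] B0])
    finally show ?thesis .
  next
    case True
    then have xb: "x1 \<in> ball 0 1" and Sne: "Sf D x1 \<noteq> 0" by auto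
    have S0: "0 \<le> Sf D x1" unfolding Sf_def by (rule sum_nonneg) auto
    have "ls (L x1) (HW0 D c B x1) \<le> 0"
    proof (rule C2_max[OF C2_W0[OF D k] open_ball xb interior_ball_sub(1)[OF xb] _ ell[OF xb]])
      show "\<And>y. y \<in> ball x1 (1 - norm x1) \<Longrightarrow> W0 D c B y \<le> W0 D c B x1"
        using mx interior_ball_sub(2)[OF xb] by auto
    qed (use lam in simp)
    moreover have "zeta x1 * (\<Sum>m\<in>UNIV. ls (L x1) (outer (gD D [m] x1) (gD D [m] x1))) + (2 * B * lam - 60 * Lam) * Sf D x1 \<le> ls (L x1) (HW0 D c B x1)"
      by (rule W0_lower[OF ell[OF xb] lam xb Lm[OF xb] Lu[OF xb] B0])
    moreover have "0 \<le> zeta x1 * (\<Sum>m\<in>UNIV. ls (L x1) (outer (gD D [m] x1) (gD D [m] x1)))"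
    proof (intro mult_nonneg_nonneg sum_nonneg)
      show "0 \<le> zeta x1" by (simp add: zeta_def)
    qed (use ls_Q_nonneg[OF ell[OF xb]] lam in auto)
    ultimately have "2 * lam * Sf D x1 \<le> 0" unfolding Blam by simp
    then show ?thesis using lam S0 Sne by (simp add: mult_le_0_iff)
  qed
  then show ?thesis using mx[OF y] by simp
qed



definition vf :: "(('n::finite) list \<Rightarrow> real^'n \<Rightarrow> real) \<Rightarrow> real^'n \<Rightarrow> real^'n \<Rightarrow> real" where
  "vf D e x = (\<Sum>i\<in>UNIV. \<Sum>j\<in>UNIV. (e$i * e$j) * D [i,j] x)"
definition gv :: "(('n::finite) list \<Rightarrow> real^'n \<Rightarrow> real) \<Rightarrow> real^'n \<Rightarrow> real^'n \<Rightarrow> real^'n" where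
  "gv D e x = (\<Sum>i\<in>UNIV. \<Sum>j\<in>UNIV. (e$i * e$j) *\<^sub>R gD D [i,j] x)"
definition Hv :: "(('n::finite) list \<Rightarrow> real^'n \<Rightarrow> real) \<Rightarrow> real^'n \<Rightarrow> real^'n \<Rightarrow> real^'n^'n" where
  "Hv D e x = (\<Sum>i\<in>UNIV. \<Sum>j\<in>UNIV. (e$i * e$j) *\<^sub>R HD D [i,j] x)"

lemma C2_v:
  assumes D: "Dfam k D" and k: "4 \<le> k"
  shows "C2 (vf D e) (gv D e) (Hv D e) (ball 0 1)"
proof -
  have "C2 (\<lambda>x. \<Sum>i\<in>UNIV. \<Sum>j\<in>UNIV. (e$i * e$j) * D [i,j] x) (\<lambda>x. \<Sum>i\<in>UNIV. \<Sum>j\<in>UNIV. (e$i * e$j) *\<^sub>R gD D [i,j] x)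
      (\<lambda>x. \<Sum>i\<in>UNIV. \<Sum>j\<in>UNIV. (e$i * e$j) *\<^sub>R HD D [i,j] x) (ball 0 1)"
  proof (rule C2_sum)
    fix i show "C2 (\<lambda>x. \<Sum>j\<in>UNIV. (e$i * e$j) * D [i,j] x) (\<lambda>x. \<Sum>j\<in>UNIV. (e$i * e$j) *\<^sub>R gD D [i,j] x)
      (\<lambda>x. \<Sum>j\<in>UNIV. (e$i * e$j) *\<^sub>R HD D [i,j] x) (ball 0 1)"
    proof (rule C2_sum)
      fix j
      have l: "length [i,j] + 2 \<le> k" using k by simp
      show "C2 (\<lambda>x. (e$i * e$j) * D [i,j] x) (\<lambda>x. (e$i * e$j) *\<^sub>R gD D [i,j] x) (\<lambda>x. (e$i * e$j) *\<^sub>R HD D [i,j] x) (ball 0 1)"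
        by (rule C2_scale[OF C2_D[OF D l]])
    qed simp
  qed simp
  then show ?thesis unfolding vf_def[abs_def] gv_def[abs_def] Hv_def[abs_def] .
qed

lemma Hv_eq:
  assumes D: "Dfam k D" and k: "4 \<le> k" and x: "x \<in> ball 0 1"
  shows "Hv D e x = d2Hm D e e x"
proof -
  have "(\<Sum>i\<in>UNIV. \<Sum>j\<in>UNIV. e $ i * e $ j * D [b, a, i, j] x) = (\<Sum>k\<in>UNIV. e $ k * (\<Sum>m\<in>UNIV. e $ m * D [m, k, a, b] x))" for a b
    using Dfam_rev4[OF D k x] by (simp add: sum_distrib_left mult.assoc)
  then show ?thesis
    unfolding Hv_def d2Hm_def HD_def by (simp add: vec_eq_iff sum_component)
qed

lemma d2Hm_Sym:
  assumes D: "Dfam k D" and k: "4 \<le> k" and x: "x \<in> ball 0 1"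
  shows "d2Hm D e h x \<in> Sym"
  unfolding Sym_iff d2Hm_def using Dfam_swap_4_23[OF D k x] by simp

lemma vf_eq: "vf D e x = e \<bullet> (Hm D x *v e)"
  by (simp add: vf_def Hm_def inner_vec_def matrix_vector_mult_def sum_distrib_left mult_ac)

lemma vf_sq_le:
  assumes e: "norm e = 1"
  shows "(vf D e x)^2 \<le> (\<Sum>m\<in>UNIV. (norm (gD D [m] x))^2)"
proof -
  have "vf D e x = (\<Sum>i\<in>UNIV. \<Sum>j\<in>UNIV. e$j * (e$i * D [i,j] x))" by (simp add: vf_def mult_ac)
  also have "\<dots> = (\<Sum>j\<in>UNIV. \<Sum>i\<in>UNIV. e$j * (e$i * D [i,j] x))" by (rule sum.swap)
  also have "\<dots> = (\<Sum>j\<in>UNIV. e$j * (e \<bullet> gD D [j] x))" by (simp add: gD_def inner_vec_def sum_distrib_left)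
  finally have v: "vf D e x = (\<Sum>j\<in>UNIV. e$j * (e \<bullet> gD D [j] x))" .
  have "(vf D e x)^2 \<le> (\<Sum>j\<in>UNIV. (e$j)^2) * (\<Sum>j\<in>UNIV. (e \<bullet> gD D [j] x)^2)"
    unfolding v by (rule Cauchy_Schwarz_ineq_sum)
  also have "(\<Sum>j\<in>UNIV. (e$j)^2) = 1"
  proof -
    have "(norm e)^2 = e \<bullet> e" by (rule power2_norm_eq_inner)
    then have "e \<bullet> e = 1" using e by simp
    then show ?thesis by (simp add: inner_vec_def power2_eq_square)
  qed
  also have "(\<Sum>j\<in>UNIV. (e \<bullet> gD D [j] x)^2) \<le> (\<Sum>m\<in>UNIV. (norm (gD D [m] x))^2)"
  proof (rule sum_mono)
    fix j
    have "\<bar>e \<bullet> gD D [j] x\<bar> \<le> norm (gD D [j] x)" using Cauchy_Schwarz_ineq2[of e "gD D [j] x"] e by simp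
    then show "(e \<bullet> gD D [j] x)^2 \<le> (norm (gD D [j] x))^2"
      by (metis abs_ge_zero power2_abs power_mono)
  qed
  finally show ?thesis by simp
qed



definition Pf :: "(('n::finite) list \<Rightarrow> real^'n \<Rightarrow> real) \<Rightarrow> real^'n \<Rightarrow> real^'n \<Rightarrow> real" where
  "Pf D e x = zeta x * vf D e x"
definition gP :: "(('n::finite) list \<Rightarrow> real^'n \<Rightarrow> real) \<Rightarrow> real^'n \<Rightarrow> real^'n \<Rightarrow> real^'n" where
  "gP D e x = zeta x *\<^sub>R gv D e x + vf D e x *\<^sub>R gzeta x"
definition HP :: "(('n::finite) list \<Rightarrow> real^'n \<Rightarrow> real) \<Rightarrow> real^'n \<Rightarrow> real^'n \<Rightarrow> real^'n^'n" where
  "HP D e x = zeta x *\<^sub>R Hv D e x + vf D e x *\<^sub>R Hzeta x + outer (gv D e x) (gzeta x) + outer (gzeta x) (gv D e x)"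
definition HP2 :: "(('n::finite) list \<Rightarrow> real^'n \<Rightarrow> real) \<Rightarrow> real^'n \<Rightarrow> real^'n \<Rightarrow> real^'n^'n" where
  "HP2 D e x = Pf D e x *\<^sub>R HP D e x + Pf D e x *\<^sub>R HP D e x + outer (gP D e x) (gP D e x) + outer (gP D e x) (gP D e x)"

definition W1 where "W1 D e c B A x = Pf D e x * Pf D e x + A * W0 D c B x"
definition gW1 where "gW1 D e c B A x = (Pf D e x *\<^sub>R gP D e x + Pf D e x *\<^sub>R gP D e x) + A *\<^sub>R gW0 D c B x"
definition HW1 where "HW1 D e c B A x = HP2 D e x + A *\<^sub>R HW0 D c B x"

lemma C2_P:
  assumes D: "Dfam k D" and k: "4 \<le> k"
  shows "C2 (Pf D e) (gP D e) (HP D e) (ball 0 1)"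
  using C2_mult[OF C2_zeta C2_v[OF D k, of e]]
  unfolding Pf_def[abs_def] gP_def[abs_def] HP_def[abs_def] .

lemma C2_W1:
  assumes D: "Dfam k D" and k: "4 \<le> k"
  shows "C2 (W1 D e c B A) (gW1 D e c B A) (HW1 D e c B A) (ball 0 1)"
proof -
  have k3: "3 \<le> k" using k by simp
  show ?thesis
    using C2_add[OF C2_mult[OF C2_P[OF D k] C2_P[OF D k]] C2_scale[OF C2_W0[OF D k3], of A c B]]
    unfolding W1_def[abs_def] gW1_def[abs_def] HW1_def[abs_def] HP2_def[abs_def] .
qed

lemma ls_Q_add: "ls L (outer (a + b) (a + b)) = ls L (outer a a) + 2 * ls L (outer a b) + ls L (outer b b)"
  by (simp add: outer_add_left outer_add_right ls_add ls_outer_swap[of L b a])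

lemma P2_lower:
  fixes D :: "('n::finite) list \<Rightarrow> real^'n \<Rightarrow> real"
  assumes ell: "ellop lam Lam L" and lam: "0 < lam" "lam \<le> Lam" and x: "x \<in> ball 0 1"
    and v0: "0 \<le> vf D e x" and Lv0: "0 \<le> ls L (Hv D e x)"
  shows "-216 * (Lam * (zeta x * (vf D e x * vf D e x))) \<le> ls L (HP2 D e x)"
proof -
  define ee where "ee = eta x"
  define v where "v = vf D e x"
  define Lv where "Lv = ls L (Hv D e x)"
  define lsI where "lsI = ls L (mat 1)"
  define Qe where "Qe = ls L (outer (geta x) (geta x))"
  define qv where "qv = ls L (outer (gv D e x) (gv D e x))"
  define bv where "bv = ls L (outer (geta x) (gv D e x))"
  have lam0: "0 \<le> lam" using lam by simp
  have e: "0 \<le> ee" "ee \<le> 1" using eta_bounds[of x] x by (auto simp: ee_def)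
  have I: "lam \<le> lsI" "lsI \<le> Lam" using ls_id_lower[OF ell] ls_id_upper[OF ell] by (auto simp: lsI_def)
  have Qe: "0 \<le> Qe" "Qe \<le> 4 * Lam"
    using ls_Q_nonneg[OF ell lam0] Qeta_upper[OF ell lam, of x] x by (auto simp: Qe_def)
  have qv: "0 \<le> qv" using ls_Q_nonneg[OF ell lam0] by (simp add: qv_def)
  have hZ: "ls L (Hzeta x) = -4 * (ee * lsI) + 2 * Qe"
    by (simp add: ls_Hzeta ls_Heta ee_def lsI_def Qe_def)
  have gz: "gzeta x = (2 * ee) *\<^sub>R geta x" by (simp add: gzeta_def ee_def scaleR_2[symmetric])
  have hC: "ls L (outer (gzeta x) (gv D e x)) = 2 * ee * bv"
    unfolding gz by (simp add: outer_scaleR_left ls_scaleR bv_def)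
  have hP: "ls L (HP D e x) = (ee * ee) * Lv + v * (-4 * (ee * lsI) + 2 * Qe) + 2 * (2 * ee * bv)"
  proof -
    have "ls L (HP D e x) = zeta x * ls L (Hv D e x) + vf D e x * ls L (Hzeta x) + 2 * ls L (outer (gzeta x) (gv D e x))"
      unfolding HP_def by (rule ls_mult_H)
    then show ?thesis unfolding hZ hC by (simp add: zeta_def ee_def v_def Lv_def)
  qed
  have gPe: "gP D e x = (ee * ee) *\<^sub>R gv D e x + (2 * ee * v) *\<^sub>R geta x"
    by (simp add: gP_def zeta_def gz ee_def v_def)
  have hG: "ls L (outer (gP D e x) (gP D e x)) = (ee * ee) * (ee * ee) * qv + 2 * ((ee * ee) * (2 * ee * v) * bv) + (2 * ee * v) * (2 * ee * v) * Qe"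
    unfolding gPe ls_Q_add ls_Q_scale by (simp add: qv_def Qe_def bv_def ls_outer_swap[of L "gv D e x" "geta x"])
  have tot0: "ls L (HP2 D e x) = 2 * ((ee * ee) * v) * ls L (HP D e x) + 2 * ls L (outer (gP D e x) (gP D e x))"
  proof -
    have "ls L (HP2 D e x) = Pf D e x * ls L (HP D e x) + Pf D e x * ls L (HP D e x) + 2 * ls L (outer (gP D e x) (gP D e x))"
      unfolding HP2_def by (rule ls_mult_H)
    then show ?thesis by (simp add: Pf_def zeta_def ee_def v_def)
  qed
  define M1 where "M1 = ee * ee * (ee * ee) * (v * Lv)"
  define M2 where "M2 = ee * ee * (ee * ee) * qv"
  define K where "K = ee * ee * (v * v)"
  define M3 where "M3 = K * (ee * lsI)"
  define M4 where "M4 = K * Qe"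
  define M5 where "M5 = ee * ee * ee * (v * bv)"
  have tot: "ls L (HP2 D e x) = 2 * M1 + 2 * M2 - 8 * M3 + 12 * M4 + 16 * M5"
    unfolding tot0 hP hG M1_def M2_def M3_def M4_def M5_def K_def by (simp add: algebra_simps)
  have cross: "- (64 * M4 + M2) \<le> 16 * M5"
  proof -
    have "- (ls L (outer ((8 * ee * v) *\<^sub>R geta x) ((8 * ee * v) *\<^sub>R geta x))
            + ls L (outer ((ee * ee) *\<^sub>R gv D e x) ((ee * ee) *\<^sub>R gv D e x)))
          \<le> 2 * ls L (outer ((8 * ee * v) *\<^sub>R geta x) ((ee * ee) *\<^sub>R gv D e x))"
      by (rule ls_B_lower[OF ell lam0])
    then show ?thesis unfolding ls_Q_scale M4_def M2_def M5_def K_def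
      by (simp add: Qe_def qv_def bv_def algebra_simps)
  qed
  have K0: "0 \<le> K" by (simp add: K_def)
  have M1: "0 \<le> M1" using v0 Lv0 by (simp add: M1_def v_def Lv_def)
  have M2: "0 \<le> M2" using qv by (simp add: M2_def)
  have eI: "ee * lsI \<le> Lam" using e I mult_mono[of ee 1 lsI Lam] lam by simp
  have M3: "M3 \<le> K * Lam" unfolding M3_def by (rule mult_left_mono[OF eI K0])
  have M4: "M4 \<le> K * (4 * Lam)" unfolding M4_def by (rule mult_left_mono[OF Qe(2) K0])
  have "zeta x * (vf D e x * vf D e x) = K" by (simp add: zeta_def K_def ee_def v_def)
  then show ?thesis unfolding tot using cross M1 M2 M3 M4 by (simp add: algebra_simps)
qed



lemma W1_lower:
  fixes D :: "('n::finite) list \<Rightarrow> real^'n \<Rightarrow> real"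
  assumes ell: "ellop lam Lam L" and lam: "0 < lam" "lam \<le> Lam" and x: "x \<in> ball 0 1"
    and e: "norm e = 1" and v0: "0 \<le> vf D e x" and Lv0: "0 \<le> ls L (Hv D e x)"
    and Lm: "\<And>m. ls L (HD D [m] x) = 0"
    and Lu: "0 \<le> ut D c x * ls L (HD D [] x)"
    and B: "B = 30 * Lam / lam + 1" and A: "A = 216 * Lam / lam + 1"
  shows "lam * (zeta x * (vf D e x * vf D e x)) \<le> ls L (HW1 D e c B A x)"
proof -
  have lam0: "0 \<le> lam" using lam by simp
  have B0: "0 \<le> B" using lam by (simp add: B)
  have A0: "0 \<le> A" using lam by (simp add: A)
  have Alam: "A * lam - 216 * Lam = lam" using lam by (simp add: A field_simps)
  have Blam: "2 * B * lam - 60 * Lam = 2 * lam" using lam by (simp add: B field_simps)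
  define sqQ where "sqQ = (\<Sum>m\<in>UNIV. ls L (outer (gD D [m] x) (gD D [m] x)))"
  have w0: "zeta x * sqQ + (2 * B * lam - 60 * Lam) * Sf D x \<le> ls L (HW0 D c B x)"
    unfolding sqQ_def by (rule W0_lower[OF ell lam x Lm Lu B0])
  have S0: "0 \<le> Sf D x" unfolding Sf_def by (rule sum_nonneg) auto
  have z0: "0 \<le> zeta x" by (simp add: zeta_def)
  have "lam * (vf D e x)^2 \<le> lam * (\<Sum>m\<in>UNIV. (norm (gD D [m] x))^2)"
    by (rule mult_left_mono[OF vf_sq_le[OF e] lam0])
  also have "\<dots> = (\<Sum>m\<in>UNIV. lam * (norm (gD D [m] x))^2)" by (simp add: sum_distrib_left)
  also have "\<dots> \<le> sqQ" unfolding sqQ_def by (rule sum_mono) (rule ls_Q_lower[OF ell])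
  finally have sq: "lam * (vf D e x * vf D e x) \<le> sqQ" by (simp add: power2_eq_square)
  have "zeta x * (lam * (vf D e x * vf D e x)) \<le> zeta x * sqQ" by (rule mult_left_mono[OF sq z0])
  also have "\<dots> \<le> ls L (HW0 D c B x)"
  proof -
    have "0 \<le> 2 * lam * Sf D x" using lam S0 by simp
    then show ?thesis using w0 unfolding Blam by linarith
  qed
  finally have h0: "lam * (zeta x * (vf D e x * vf D e x)) \<le> ls L (HW0 D c B x)" by (simp add: mult_ac)
  have h1: "A * (lam * (zeta x * (vf D e x * vf D e x))) \<le> A * ls L (HW0 D c B x)"
    by (rule mult_left_mono[OF h0 A0])
  have h2: "-216 * (Lam * (zeta x * (vf D e x * vf D e x))) \<le> ls L (HP2 D e x)"
    by (rule P2_lower[OF ell lam x v0 Lv0])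
  have "ls L (HW1 D e c B A x) = ls L (HP2 D e x) + A * ls L (HW0 D c B x)"
    by (simp add: HW1_def ls_add ls_scaleR)
  moreover have "lam * (zeta x * (vf D e x * vf D e x)) = A * (lam * (zeta x * (vf D e x * vf D e x))) - 216 * (Lam * (zeta x * (vf D e x * vf D e x)))"
  proof -
    have "A * (lam * (zeta x * (vf D e x * vf D e x))) - 216 * (Lam * (zeta x * (vf D e x * vf D e x)))
        = (A * lam - 216 * Lam) * (zeta x * (vf D e x * vf D e x))" by (simp add: algebra_simps)
    then show ?thesis unfolding Alam by simp
  qed
  ultimately show ?thesis using h1 h2 by linarith
qed



definition Phi where
  "Phi D e c B A x = (zeta x * max 0 (vf D e x)) * (zeta x * max 0 (vf D e x)) + A * W0 D c B x"

lemma cont_vf: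
  assumes D: "Dfam k D" and k: "2 \<le> k"
  shows "continuous_on (cball 0 1) (vf D e)"
proof -
  have c: "continuous_on (cball 0 1) (D [i,j])" for i j using Dfam_cont[OF D] k by simp
  show ?thesis unfolding vf_def[abs_def] by (intro continuous_intros c)
qed

lemma cont_Phi:
  assumes D: "Dfam k D" and k: "2 \<le> k"
  shows "continuous_on (cball 0 1) (Phi D e c B A)"
proof -
  have cv: "continuous_on (cball 0 1) (vf D e)" by (rule cont_vf[OF D k])
  have cw: "continuous_on (cball 0 1) (W0 D c B)" by (rule cont_W0[OF D]) (use k in simp)
  show ?thesis unfolding Phi_def[abs_def] zeta_def
    by (intro continuous_intros cont_eta cv cw)
qed

lemma Phi_bound:
  fixes D :: "('n::finite) list \<Rightarrow> real^'n \<Rightarrow> real"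
  assumes D: "Dfam k D" and k: "4 \<le> k"
    and ell: "\<And>x. x \<in> ball 0 1 \<Longrightarrow> ellop lam Lam (L x)" and lam: "0 < lam" "lam \<le> Lam"
    and Lm: "\<And>x m. x \<in> ball 0 1 \<Longrightarrow> ls (L x) (HD D [m] x) = 0"
    and Lu: "\<And>x. x \<in> ball 0 1 \<Longrightarrow> 0 \<le> ut D c x * ls (L x) (HD D [] x)"
    and Lv: "\<And>x. x \<in> ball 0 1 \<Longrightarrow> 0 \<le> ls (L x) (Hv D e x)"
    and R: "\<And>x. x \<in> cball 0 1 \<Longrightarrow> ut D c x * ut D c x \<le> R"
    and e: "norm e = 1"
    and B: "B = 30 * Lam / lam + 1" and A: "A = 216 * Lam / lam + 1"
    and y: "y \<in> cball 0 1"
  shows "Phi D e c B A y \<le> A * (B * R)"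
proof -
  have k3: "3 \<le> k" using k by simp
  have A0: "0 \<le> A" using lam by (simp add: A)
  have lam0: "0 \<le> lam" using lam by simp
  have W0b: "\<And>x. x \<in> cball 0 1 \<Longrightarrow> W0 D c B x \<le> B * R"
    by (rule W0_bound[OF D k3 ell lam Lm Lu R B]) auto
  have cP: "continuous_on (cball 0 1) (Phi D e c B A)" by (rule cont_Phi[OF D]) (use k in simp)
  obtain x1 where x1: "x1 \<in> cball 0 1" and mx: "\<And>y. y \<in> cball 0 1 \<Longrightarrow> Phi D e c B A y \<le> Phi D e c B A x1"
    using max_in_cball[OF cP] by blast
  have "Phi D e c B A x1 \<le> A * (B * R)"
  proof (cases "x1 \<in> ball 0 1 \<and> 0 < vf D e x1")
    case False
    then have "zeta x1 * max 0 (vf D e x1) = 0" using eta_sphere[OF x1] by (auto simp: zeta_def)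
    then have "Phi D e c B A x1 = A * W0 D c B x1" by (simp add: Phi_def)
    also have "\<dots> \<le> A * (B * R)" by (rule mult_left_mono[OF W0b[OF x1] A0])
    finally show ?thesis .
  next
    case True
    then have xb: "x1 \<in> ball 0 1" and vpos: "0 < vf D e x1" by auto
    have cv: "isCont (vf D e) x1"
    proof -
      have "continuous_on (ball 0 1) (vf D e)"
        by (rule continuous_on_subset[OF cont_vf[OF D] ball_subset_cball]) (use k in simp)
      then show ?thesis using xb by (simp add: continuous_on_eq_continuous_at)
    qed
    obtain \<rho> where \<rho>: "\<rho> > 0" "\<And>y. dist y x1 < \<rho> \<Longrightarrow> dist (vf D e y) (vf D e x1) < vf D e x1"
      using cv vpos unfolding continuous_at_eps_delta by blast
    define \<delta> where "\<delta> = min \<rho> (1 - norm x1)"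
    have d: "0 < \<delta>" using \<rho> interior_ball_sub(1)[OF xb] by (simp add: \<delta>_def)
    have loc: "W1 D e c B A y \<le> W1 D e c B A x1" if "y \<in> ball x1 \<delta>" for y
    proof -
      have yc: "y \<in> cball 0 1" using that interior_ball_sub(2)[OF xb] by (auto simp: \<delta>_def)
      have "dist y x1 < \<rho>" using that by (simp add: \<delta>_def dist_commute)
      then have "dist (vf D e y) (vf D e x1) < vf D e x1" by (rule \<rho>(2))
      then have vy: "0 < vf D e y" by (simp add: dist_real_def)
      have "W1 D e c B A y = Phi D e c B A y" using vy by (simp add: W1_def Phi_def Pf_def)
      also have "\<dots> \<le> Phi D e c B A x1" by (rule mx[OF yc])
      also have "\<dots> = W1 D e c B A x1" using vpos by (simp add: W1_def Phi_def Pf_def)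
      finally show ?thesis .
    qed
    have "ls (L x1) (HW1 D e c B A x1) \<le> 0"
      by (rule C2_max[OF C2_W1[OF D k] open_ball xb d loc ell[OF xb] lam0])
    moreover have "lam * (zeta x1 * (vf D e x1 * vf D e x1)) \<le> ls (L x1) (HW1 D e c B A x1)"
      by (rule W1_lower[OF ell[OF xb] lam xb e _ Lv[OF xb] Lm[OF xb] Lu[OF xb] B A]) (use vpos in simp)
    moreover have "0 < lam * (zeta x1 * (vf D e x1 * vf D e x1))"
      using lam vpos eta_pos[OF xb] by (simp add: zeta_def)
    ultimately show ?thesis by simp
  qed
  then show ?thesis using mx[OF y] by simp
qed



lemma sup_inf_ball:
  fixes u :: "real^'n::finite \<Rightarrow> real"
  assumes c: "continuous_on (cball 0 1) u" and x: "x \<in> cball 0 1"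
  shows "u x \<le> (SUP y\<in>ball 0 1. u y)" "(INF y\<in>ball 0 1. u y) \<le> u x"
proof -
  have bd: "bounded (u ` cball 0 1)" by (rule compact_imp_bounded[OF compact_continuous_image[OF c compact_cball]])
  have bb: "bounded (u ` ball 0 1)" by (rule bounded_subset[OF bd]) (auto)
  have cl: "closure (ball (0::real^'n) 1) = cball 0 1" by simp
  have c': "continuous_on (closure (ball 0 1)) u" using c cl by simp
  have x': "x \<in> closure (ball 0 1)" using x cl by simp
  show "u x \<le> (SUP y\<in>ball 0 1. u y)"
    by (rule continuous_le_on_closure[OF c' x']) (rule cSUP_upper[OF _ bounded_imp_bdd_above[OF bb]])
  show "(INF y\<in>ball 0 1. u y) \<le> u x"
    by (rule continuous_ge_on_closure[OF c' x']) (rule cINF_lower[OF bounded_imp_bdd_below[OF bb]])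
qed

lemma eta_half: "y \<in> ball (0::real^'n::finite) (1/2) \<Longrightarrow> 3/4 \<le> eta y"
proof -
  assume "y \<in> ball 0 (1/2)"
  then have n: "norm y < 1/2" by simp
  have "y \<bullet> y = (norm y)^2" by (simp add: power2_norm_eq_inner)
  also have "\<dots> \<le> (1/2)^2" using n by (intro power_mono) auto
  finally have "y \<bullet> y \<le> 1/4" by (simp add: power2_eq_square)
  then show ?thesis by (simp add: eta_def)
qed

lemma zeta_half: "y \<in> ball (0::real^'n::finite) (1/2) \<Longrightarrow> 9/16 \<le> zeta y"
proof -
  assume "y \<in> ball 0 (1/2)"
  then have "3/4 \<le> eta y" by (rule eta_half)
  then have "(3/4) * (3/4) \<le> eta y * eta y" by (intro mult_mono) auto
  then show ?thesis by (simp add: zeta_def)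
qed

lemma setup_common:
  fixes F :: "('n::finite) mat \<Rightarrow> real" and u :: "real^'n \<Rightarrow> real"
  assumes qc: "quasiconcave F" and ue: "unif_elliptic lam Lam F" and F0: "F 0 = 0"
    and DF: "\<forall>M\<in>Sym. (F has_derivative blinfun_apply (F' M)) (at M within Sym)"
    and D: "Dfam k D" and k: "3 \<le> k" and u: "\<forall>y\<in>cball 0 1. D [] y = u y"
    and eq: "\<forall>x\<in>ball 0 1. F (hess u x) = 0"
    and cdef: "c = (SUP y\<in>ball 0 1. u y)"
  shows "\<And>x. x \<in> ball 0 1 \<Longrightarrow> ellop lam Lam (F' (Hm D x))"
    and "\<And>x m. x \<in> ball 0 1 \<Longrightarrow> ls (F' (Hm D x)) (HD D [m] x) = 0"
    and "\<And>x. x \<in> ball 0 1 \<Longrightarrow> 0 \<le> ut D c x * ls (F' (Hm D x)) (HD D [] x)"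
    and "\<And>x. x \<in> cball 0 1 \<Longrightarrow> ut D c x * ut D c x \<le> (osc u (ball 0 1))^2"
proof -
  have k2: "2 \<le> k" using k by simp
  show ell: "ellop lam Lam (F' (Hm D x))" if x: "x \<in> ball 0 1" for x
    by (rule ellop_of_deriv[OF ue DF Hm_Sym[OF D k2 x]])
  show "ls (F' (Hm D x)) (HD D [m] x) = 0" if x: "x \<in> ball 0 1" for x m
  proof -
    have "HD D [m] x = dHm D (axis m 1) x"
      unfolding HD_def dHm_def using Dfam_rev3[OF D k x] by (simp add: vec_eq_iff sum_axis_mult)
    then show ?thesis using eqn_first[OF D k u eq DF x] ls_Sym[OF dHm_Sym[OF D k x]] by simp
  qed
  show "0 \<le> ut D c x * ls (F' (Hm D x)) (HD D [] x)" if x: "x \<in> ball 0 1" for x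
  proof -
    have h: "HD D [] x = Hm D x"
      unfolding HD_def Hm_def using Dfam_swap_2_01[OF D k2 x] by (simp add: vec_eq_iff)
    have "F (hess u x) = 0" using eq x by blast
    then have "F (Hm D x) \<le> F 0" using hess_eq[OF D k2 u x] F0 by simp
    then have "0 \<le> blinfun_apply (F' (Hm D x)) (0 - Hm D x)"
      by (rule qc_first_order[OF qc DF Hm_Sym[OF D k2 x] Sym_zero])
    then have l: "ls (F' (Hm D x)) (HD D [] x) \<le> 0"
      unfolding h ls_Sym[OF Hm_Sym[OF D k2 x]] by (simp add: blinfun.bilinear_simps)
    have c0: "continuous_on (cball 0 1) (D [])" using Dfam_cont[OF D, of "[]"] by simp
    have cu: "continuous_on (cball 0 1) u"
      by (rule continuous_on_eq[OF c0]) (use u in auto)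
    have "u x \<le> c" unfolding cdef by (rule sup_inf_ball(1)[OF cu]) (use x in auto)
    then have "ut D c x \<le> 0" using u x by (simp add: ut_def)
    then show ?thesis using l by (simp add: mult_nonpos_nonpos)
  qed
  show "ut D c x * ut D c x \<le> (osc u (ball 0 1))^2" if x: "x \<in> cball 0 1" for x
  proof -
    have c0: "continuous_on (cball 0 1) (D [])" using Dfam_cont[OF D, of "[]"] by simp
    have cu: "continuous_on (cball 0 1) u"
      by (rule continuous_on_eq[OF c0]) (use u in auto)
    have a: "u x \<le> c" unfolding cdef by (rule sup_inf_ball(1)[OF cu x])
    have b: "(INF y\<in>ball 0 1. u y) \<le> u x" by (rule sup_inf_ball(2)[OF cu x])
    have ux: "ut D c x = u x - c" using u x by (simp add: ut_def)
    have os: "osc u (ball 0 1) = c - (INF y\<in>ball 0 1. u y)" by (simp add: osc_def cdef)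
    have "\<bar>ut D c x\<bar> \<le> osc u (ball 0 1)" unfolding ux os using a b by linarith
    then have "\<bar>ut D c x\<bar> * \<bar>ut D c x\<bar> \<le> osc u (ball 0 1) * osc u (ball 0 1)"
      by (intro mult_mono) auto
    then show ?thesis by (simp add: power2_eq_square abs_mult[symmetric])
  qed
qed



lemma opnorm_from_upper:
  fixes F :: "('n::finite) mat \<Rightarrow> real"
  assumes ue: "unif_elliptic lam Lam F" and F0: "F 0 = 0" and M: "M \<in> Sym" and FM: "F M = 0"
    and mu: "0 \<le> \<mu>" and up: "\<And>\<xi>. \<xi> \<bullet> (M *v \<xi>) \<le> \<mu> * (\<xi> \<bullet> \<xi>)"
  shows "opnorm M \<le> (1 + Lam / lam) * \<mu>"
proof -
  have lam: "0 < lam" "lam \<le> Lam" using ue by (auto simp: unif_elliptic_def)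
  define N where "N = \<mu> *\<^sub>R mat 1 - M"
  have NS: "N \<in> Sym" unfolding N_def by (intro Sym_diff Sym_scaleR Sym_mat M)
  have mv: "(\<mu> *\<^sub>R mat 1) *v \<xi> = \<mu> *\<^sub>R \<xi>" for \<xi> :: "real^'n"
    by (simp only: scaleR_matrix_vector_assoc[symmetric] matrix_vector_mul_lid)
  have Np: "psd N" unfolding psd_def N_def
  proof
    fix \<xi> :: "real^'n"
    show "0 \<le> \<xi> \<bullet> ((\<mu> *\<^sub>R mat 1 - M) *v \<xi>)"
      using up[of \<xi>] by (simp add: matrix_vector_mult_diff_rdistrib mv inner_diff_right)
  qed
  have Ip: "psd (\<mu> *\<^sub>R mat 1 :: 'n mat)" unfolding psd_def by (simp add: mv mu)
  have IS: "\<mu> *\<^sub>R mat 1 \<in> (Sym :: 'n mat set)" by (intro Sym_scaleR Sym_mat)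
  have e1: "lam * opnorm N \<le> F (M + N) - F M" using ue M NS Np unfolding unif_elliptic_def by blast
  have e2: "F (0 + \<mu> *\<^sub>R mat 1) - F 0 \<le> Lam * opnorm (\<mu> *\<^sub>R mat 1 :: 'n mat)"
    using ue Sym_zero IS Ip unfolding unif_elliptic_def by blast
  have oI: "opnorm (\<mu> *\<^sub>R mat 1 :: 'n mat) = \<mu>" using mu by (simp add: opnorm_scaleR opnorm_mat1)
  have MN: "M + N = \<mu> *\<^sub>R mat 1" by (simp add: N_def)
  have "lam * opnorm N \<le> Lam * \<mu>" using e1 e2 FM F0 oI MN by simp
  then have oN: "opnorm N \<le> Lam / lam * \<mu>" using lam by (simp add: field_simps)
  have "M = \<mu> *\<^sub>R mat 1 + (-1) *\<^sub>R N" by (simp add: N_def)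
  then have "opnorm M \<le> opnorm (\<mu> *\<^sub>R mat 1 :: 'n mat) + opnorm ((-1) *\<^sub>R N)"
    by (metis opnorm_triangle)
  also have "\<dots> = \<mu> + opnorm N"
  proof -
    have o2: "opnorm ((-1::real) *\<^sub>R N) = opnorm N" using opnorm_scaleR[of "-1" N] by simp
    show ?thesis by (simp only: oI o2)
  qed
  also have "\<dots> \<le> (1 + Lam / lam) * \<mu>" using oN by (simp add: algebra_simps)
  finally show ?thesis .
qed

lemma osc_nonneg:
  fixes u :: "real^'n::finite \<Rightarrow> real"
  assumes c: "continuous_on (cball 0 1) u"
  shows "0 \<le> osc u (ball 0 1)"
  using sup_inf_ball[OF c, of 0] by (simp add: osc_def)

lemma part1:
  fixes F :: "('n::finite) mat \<Rightarrow> real" and u :: "real^'n \<Rightarrow> real"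
  assumes lam: "0 < lam" "lam \<le> Lam"
    and qc: "quasiconcave F" and ue: "unif_elliptic lam Lam F" and C1: "C1_Sym F" and F0: "F 0 = 0"
    and Ck: "Ck_on 3 (cball 0 1) u" and eq: "\<forall>x\<in>ball 0 1. F (hess u x) = 0"
    and x: "x \<in> ball 0 (1/2)"
  shows "norm (grad u x) \<le> (4/3 * sqrt (30 * Lam / lam + 1)) * osc u (ball 0 1)"
proof -
  obtain F' where DF: "\<forall>M\<in>Sym. (F has_derivative blinfun_apply (F' M)) (at M within Sym)"
    using C1 unfolding C1_Sym_def by blast
  obtain D where D: "Dfam 3 D" and u: "\<forall>x\<in>cball 0 1. D [] x = u x" using Ck_Dfam[OF Ck] by blast
  define c where "c = (SUP y\<in>ball 0 1. u y)"
  define B where "B = 30 * Lam / lam + 1"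
  define os where "os = osc u (ball 0 1)"
  note S = setup_common[OF qc ue F0 DF D _ u eq c_def, simplified]
  have xc: "x \<in> cball 0 1" and xb: "x \<in> ball 0 1" using x by auto
  have W: "W0 D c B x \<le> B * os^2"
    unfolding os_def by (rule W0_bound[OF D _ S(1) lam S(2) S(3) S(4) B_def xc]) auto
  have B0: "0 \<le> B" using lam by (simp add: B_def)
  have z: "9/16 \<le> zeta x" by (rule zeta_half[OF x])
  have S0: "0 \<le> Sf D x" unfolding Sf_def by (rule sum_nonneg) auto
  have "zeta x * Sf D x \<le> W0 D c B x" using B0 by (simp add: W0_def)
  moreover have "9/16 * Sf D x \<le> zeta x * Sf D x" by (rule mult_right_mono[OF z S0])
  ultimately have "Sf D x \<le> 16/9 * (B * os^2)" using W by linarith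
  moreover have "(norm (grad u x))^2 = Sf D x"
    using grad_eq[OF D _ u xb] norm_gD0[of D x] by (simp add: gD_def)
  moreover have "16/9 * (B * os^2) = (4/3 * sqrt B * os)^2"
  proof -
    have "(4/3 * sqrt B * os)^2 = (4/3)^2 * (sqrt B)^2 * os^2" by (simp only: power_mult_distrib)
    also have "(sqrt B)^2 = B" using B0 by simp
    finally show ?thesis using B0 by (simp add: power2_eq_square)
  qed
  ultimately have "(norm (grad u x))^2 \<le> (4/3 * sqrt B * os)^2" by simp
  moreover have "0 \<le> 4/3 * sqrt B * os"
  proof -
    have "continuous_on (cball 0 1) (D [])" using Dfam_cont[OF D, of "[]"] by simp
    then have "continuous_on (cball 0 1) u" by (rule continuous_on_eq) (use u in auto)
    then have "0 \<le> os" unfolding os_def by (rule osc_nonneg)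
    then show ?thesis using B0 by simp
  qed
  ultimately have "norm (grad u x) \<le> 4/3 * sqrt B * os" by (rule power2_le_imp_le)
  then show ?thesis by (simp add: B_def os_def)
qed



lemma part2:
  fixes F :: "('n::finite) mat \<Rightarrow> real" and u :: "real^'n \<Rightarrow> real"
  assumes lam: "0 < lam" "lam \<le> Lam"
    and qc: "quasiconcave F" and ue: "unif_elliptic lam Lam F" and C2F: "C2_Sym F" and F0: "F 0 = 0"
    and Ck: "Ck_on 4 (cball 0 1) u" and eq: "\<forall>x\<in>ball 0 1. F (hess u x) = 0"
    and x: "x \<in> ball 0 (1/2)"
  shows "opnorm (hess u x) \<le> ((1 + Lam / lam) * (16/9 * sqrt ((216 * Lam / lam + 1) * (30 * Lam / lam + 1)))) * osc u (ball 0 1)"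
proof -
  obtain F' F'' where DF: "\<forall>M\<in>Sym. (F has_derivative blinfun_apply (F' M)) (at M within Sym)"
    and DF2: "\<forall>M\<in>Sym. (F' has_derivative blinfun_apply (F'' M)) (at M within Sym)"
    using C2F unfolding C2_Sym_def by blast
  obtain D where D: "Dfam 4 D" and u: "\<forall>x\<in>cball 0 1. D [] x = u x" using Ck_Dfam[OF Ck] by blast
  define c where "c = (SUP y\<in>ball 0 1. u y)"
  define B where "B = 30 * Lam / lam + 1"
  define A where "A = 216 * Lam / lam + 1"
  define os where "os = osc u (ball 0 1)"
  define \<mu> where "\<mu> = 16/9 * sqrt (A * B) * os"
  note S = setup_common[OF qc ue F0 DF D _ u eq c_def, simplified]
  have k4: "4 \<le> (4::nat)" by simp
  have xc: "x \<in> cball 0 1" and xb: "x \<in> ball 0 1" using x by auto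
  have A0: "0 \<le> A" and B0: "0 \<le> B" using lam by (auto simp: A_def B_def)
  have os0: "0 \<le> os"
  proof -
    have "continuous_on (cball 0 1) (D [])" using Dfam_cont[OF D, of "[]"] by simp
    then have "continuous_on (cball 0 1) u" by (rule continuous_on_eq) (use u in auto)
    then show ?thesis unfolding os_def by (rule osc_nonneg)
  qed
  have mu0: "0 \<le> \<mu>" using A0 B0 os0 by (simp add: \<mu>_def)
  have Lv: "0 \<le> ls (F' (Hm D y)) (Hv D e y)" if y: "y \<in> ball 0 1" for y e
    using eqn_second[OF D k4 u eq qc DF DF2 y, of e] Hv_eq[OF D k4 y, of e] ls_Sym[OF d2Hm_Sym[OF D k4 y]]
    by simp
  have vle: "vf D e x \<le> \<mu>" if e: "norm e = 1" for e
  proof -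
    have P: "Phi D e c B A x \<le> A * (B * os^2)"
      unfolding os_def by (rule Phi_bound[OF D k4 S(1) lam S(2) S(3) Lv S(4) e B_def A_def xc]) auto
    have W0: "0 \<le> W0 D c B x"
    proof -
      have "0 \<le> Sf D x" unfolding Sf_def by (rule sum_nonneg) auto
      then show ?thesis using B0 by (simp add: W0_def zeta_def)
    qed
    define m where "m = max 0 (vf D e x)"
    have m0: "0 \<le> m" by (simp add: m_def)
    have "(zeta x * m)^2 \<le> A * (B * os^2)"
      using P W0 A0 by (simp add: Phi_def m_def power2_eq_square) (smt (verit) mult_nonneg_nonneg)
    also have "\<dots> = (sqrt (A * B) * os)^2"
    proof -
      have "(sqrt (A * B) * os)^2 = (sqrt (A * B))^2 * os^2" by (simp only: power_mult_distrib)
      also have "(sqrt (A * B))^2 = A * B" using A0 B0 by simp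
      finally show ?thesis by (simp add: mult_ac)
    qed
    finally have "(zeta x * m)^2 \<le> (sqrt (A * B) * os)^2" .
    then have zm: "zeta x * m \<le> sqrt (A * B) * os"
      by (rule power2_le_imp_le) (use A0 B0 os0 in simp)
    have "9/16 * m \<le> zeta x * m" by (rule mult_right_mono[OF zeta_half[OF x] m0])
    then have "m \<le> \<mu>" using zm by (simp add: \<mu>_def)
    then show ?thesis by (simp add: m_def)
  qed
  have up: "\<xi> \<bullet> (Hm D x *v \<xi>) \<le> \<mu> * (\<xi> \<bullet> \<xi>)" for \<xi>
  proof (cases "\<xi> = 0")
    case True then show ?thesis by simp
  next
    case False
    define e where "e = (1 / norm \<xi>) *\<^sub>R \<xi>"
    have ne: "norm e = 1" using False by (simp add: e_def)
    have "vf D e x = (1 / norm \<xi>) * (1 / norm \<xi>) * (\<xi> \<bullet> (Hm D x *v \<xi>))"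
      by (simp add: vf_eq e_def matrix_vector_mult_scaleR)
    then have "(1 / norm \<xi>) * (1 / norm \<xi>) * (\<xi> \<bullet> (Hm D x *v \<xi>)) \<le> \<mu>" using vle[OF ne] by simp
    then have "\<xi> \<bullet> (Hm D x *v \<xi>) \<le> \<mu> * (norm \<xi> * norm \<xi>)" using False
      by (simp add: field_simps)
    then show ?thesis by (simp add: power2_norm_eq_inner[symmetric] power2_eq_square)
  qed
  have "F (hess u x) = 0" using eq xb by blast
  then have FH: "F (Hm D x) = 0" using hess_eq[OF D _ u xb] by simp
  have "opnorm (Hm D x) \<le> (1 + Lam / lam) * \<mu>"
    by (rule opnorm_from_upper[OF ue F0 Hm_Sym[OF D _ xb] FH mu0 up]) simp
  then show ?thesis using hess_eq[OF D _ u xb] by (simp add: \<mu>_def A_def B_def os_def mult_ac)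
qed


lemma Ck_osc_nonneg:
  fixes u :: "real^'n::finite \<Rightarrow> real"
  assumes "Ck_on k (cball 0 1) u"
  shows "0 \<le> osc u (ball 0 1)"
proof -
  obtain D where D: "Dfam k D" and u: "\<forall>x\<in>cball 0 1. D [] x = u x" using Ck_Dfam[OF assms] by blast
  have "continuous_on (cball 0 1) (D [])" using Dfam_cont[OF D, of "[]"] by simp
  then have "continuous_on (cball 0 1) u" by (rule continuous_on_eq) (use u in auto)
  then show ?thesis by (rule osc_nonneg)
qed

theorem theorem3p5:
  fixes lam Lam :: real
  assumes "0 < lam" and "lam \<le> Lam"
  shows "\<exists>C::real.
    (\<forall>(F :: ('n::finite) mat \<Rightarrow> real) (u :: real^'n \<Rightarrow> real).
        quasiconcave F \<and> unif_elliptic lam Lam F \<and> C1_Sym F \<and> F 0 = 0 \<and>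
        Ck_on 3 (cball 0 1) u \<and> (\<forall>x\<in>ball 0 1. F (hess u x) = 0)
        \<longrightarrow> (\<forall>x\<in>ball 0 (1/2). norm (grad u x) \<le> C * osc u (ball 0 1))) \<and>
    (\<forall>(F :: 'n mat \<Rightarrow> real) (u :: real^'n \<Rightarrow> real).
        quasiconcave F \<and> unif_elliptic lam Lam F \<and> C1_Sym F \<and> C2_Sym F \<and> F 0 = 0 \<and>
        Ck_on 4 (cball 0 1) u \<and> (\<forall>x\<in>ball 0 1. F (hess u x) = 0)
        \<longrightarrow> (\<forall>x\<in>ball 0 (1/2). opnorm (hess u x) \<le> C * osc u (ball 0 1)))"
  proof -
  define C1 where "C1 = 4/3 * sqrt (30 * Lam / lam + 1)"
  define C2 where "C2 = (1 + Lam / lam) * (16/9 * sqrt ((216 * Lam / lam + 1) * (30 * Lam / lam + 1)))"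
  have lam: "0 < lam" "lam \<le> Lam" using assms by auto
  show ?thesis
  proof (intro exI[of _ "max C1 C2"] conjI allI impI ballI)
    fix F :: "('n::finite) mat \<Rightarrow> real" and u :: "real^'n \<Rightarrow> real" and x :: "real^'n"
    assume h: "quasiconcave F \<and> unif_elliptic lam Lam F \<and> C1_Sym F \<and> F 0 = 0 \<and>
        Ck_on 3 (cball 0 1) u \<and> (\<forall>x\<in>ball 0 1. F (hess u x) = 0)"
      and x: "x \<in> ball 0 (1/2)"
    have "norm (grad u x) \<le> C1 * osc u (ball 0 1)"
      unfolding C1_def using part1[OF lam _ _ _ _ _ _ x] h by blast
    also have "\<dots> \<le> max C1 C2 * osc u (ball 0 1)"
      by (rule mult_right_mono) (use Ck_osc_nonneg h in auto)
    finally show "norm (grad u x) \<le> max C1 C2 * osc u (ball 0 1)" .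
  next
    fix F :: "('n::finite) mat \<Rightarrow> real" and u :: "real^'n \<Rightarrow> real" and x :: "real^'n"
    assume h: "quasiconcave F \<and> unif_elliptic lam Lam F \<and> C1_Sym F \<and> C2_Sym F \<and> F 0 = 0 \<and>
        Ck_on 4 (cball 0 1) u \<and> (\<forall>x\<in>ball 0 1. F (hess u x) = 0)"
      and x: "x \<in> ball 0 (1/2)"
    have "opnorm (hess u x) \<le> C2 * osc u (ball 0 1)"
      unfolding C2_def using part2[OF lam _ _ _ _ _ _ x] h by blast
    also have "\<dots> \<le> max C1 C2 * osc u (ball 0 1)"
      by (rule mult_right_mono) (use Ck_osc_nonneg h in auto)
    finally show "opnorm (hess u x) \<le> max C1 C2 * osc u (ball 0 1)" .
  qed
qed

end
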